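(* Let $V$ be a complex vector space of dimension $2n$ with a non-degenerate skew form and $W$ a complex vector space of dimension $g$, and let $\rho$ denote the representation of $\mathrm{Sp}(g)=\mathrm{Sp}(W\oplus W^* )$ on $\Lambda(V\otimes W)$ described in the context, restricted to the subgroup $\mathrm{GL}(W^* )\subset\mathrm{Sp}(g)$. Let $\rho_0$ be the natural representation of $\mathrm{GL}(W^* )$ on $\Lambda(V\otimes W)$, in which $M\in\mathrm{GL}(W^* )$ acts on $V\otimes W$ by $\mathrm{Id}_V\otimes(M^T)^{-1}$ (extended multiplicatively to the exterior algebra). Then for every $M\in\mathrm{GL}(W^* )$, $$\rho(M)=(\det M)^n\rho_0(M).$$
   Context: $W\oplus W^*$ carries the symplectic form $\alpha((w_1,w_1^* ),(w_2,w_2^* ))=w_2^*(w_1)-w_1^*(w_2)$; $\mathrm{GL}(W^* )$ embeds in $\mathrm{Sp}(W\oplus W^*,\alpha)$ by letting $M$ act on $W^*$ as $M$ and on $W$ as $(M^T)^{-1}$ (the inverse of the dual map). With $\varepsilon$ the skew form on $V$, $h=\varepsilon\otimes\alpha$ is a non-degenerate symmetric form on $H=V\otimes(W\oplus W^* )$, $F=V\otimes W$ is maximal isotropic and $H=F\oplus F^*$. The spin representation of $\mathfrak{o}(H,h)$ on $\Lambda F$ is $X\mapsto\frac12\sum_a[(Xe_a)\tilde e^a+(X\tilde e^a)e_a]$, computed in the Clifford algebra of $Q(v)=h(v,v)/2$ acting on $\Lambda F$ with $F$ acting by exterior multiplication and $F^*$ by contraction ($e_a$ basis of $F$, $\tilde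 e^a$ dual basis). Restricting to $\mathfrak{sp}(W\oplus W^* )\subset\mathfrak{o}(H,h)$ and integrating gives $\rho$. *)

theory Defs
  imports "HOL-Analysis.Analysis" "Jordan_Normal_Form.Determinant"
begin

(* Conventions:
   V = C^(2n) with basis v_0..v_(2n-1), skew form eps(v_i,v_j) = E$$(i,j);
   W = C^g with basis w_0..w_(g-1), W* with dual basis w^0..w^(g-1).
   W (+) W* has ordered basis u_p (p < 2g): u_p = w_p (p<g), u_(g+k) = w^k.
   F = V (x) W has basis e_a = v_(a div g) (x) w_(a mod g), a < N = 2ng.
   Lambda F has basis e_S = e_(s1) ^ ... ^ e_(sk), S = {s1<...<sk} subset of {..<N}.
   Vectors of Lambda F : nat set => complex (coefficients on Pow {..<N});
   operators on Lambda F : matrices  nat set => nat set => complex,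
   entry P S T = coefficient of e_S in P(e_T). *)

definition inv_mat :: "complex mat \<Rightarrow> complex mat" where
  "inv_mat A = (SOME B. B \<in> carrier_mat (dim_row A) (dim_row A) \<and>
                        A * B = 1\<^sub>m (dim_row A) \<and> B * A = 1\<^sub>m (dim_row A))"

definition op_comp :: "nat \<Rightarrow> (nat set \<Rightarrow> nat set \<Rightarrow> complex) \<Rightarrow> (nat set \<Rightarrow> nat set \<Rightarrow> complex)
                       \<Rightarrow> nat set \<Rightarrow> nat set \<Rightarrow> complex" where
  "op_comp N P Q = (\<lambda>S T. \<Sum>U\<in>Pow {..<N}. P S U * Q U T)"

definition op_app :: "nat \<Rightarrow> (nat set \<Rightarrow> nat set \<Rightarrow> complex) \<Rightarrow> (nat set \<Rightarrow> complex)
                       \<Rightarrow> nat set \<Rightarrow> complex" where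
  "op_app N P x = (\<lambda>S. \<Sum>U\<in>Pow {..<N}. P S U * x U)"

definition wedge_op :: "nat \<Rightarrow> nat set \<Rightarrow> nat set \<Rightarrow> complex" where
  "wedge_op a S T = (if a \<notin> T \<and> S = insert a T then (-1) ^ card {b\<in>T. b < a} else 0)"

definition contr_op :: "nat \<Rightarrow> nat set \<Rightarrow> nat set \<Rightarrow> complex" where
  "contr_op a S T = (if a \<in> T \<and> S = T - {a} then (-1) ^ card {b\<in>T. b < a} else 0)"

text \<open>Elements of H = V (x) (W (+) W*) are coefficient arrays c i p (i < 2n, p < 2g)
  w.r.t. the basis v_i (x) u_p. Clifford action on Lambda F: the F-part acts by exterior
  multiplication, the F*-part phi by contraction with the functional x |-> h(x,phi),
  where h = eps (x) alpha, alpha(w_k, w^l) = delta_kl.\<close>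
definition cliff :: "nat \<Rightarrow> nat \<Rightarrow> complex mat \<Rightarrow> (nat \<Rightarrow> nat \<Rightarrow> complex)
                      \<Rightarrow> nat set \<Rightarrow> nat set \<Rightarrow> complex" where
  "cliff n g E c = (\<lambda>S T. \<Sum>a<2*n*g.
       c (a div g) (a mod g) * wedge_op a S T
     + (\<Sum>i<2*n. E $$ (a div g, i) * c i (g + a mod g)) * contr_op a S T)"

definition basis_F :: "nat \<Rightarrow> nat \<Rightarrow> nat \<Rightarrow> nat \<Rightarrow> complex" where
  "basis_F g a = (\<lambda>i p. if i = a div g \<and> p = a mod g then 1 else 0)"

text \<open>The dual basis vector of F* (h(e_b, dual_F a) = delta_ab), as an element of H.\<close>
definition dual_F :: "nat \<Rightarrow> complex mat \<Rightarrow> nat \<Rightarrow> nat \<Rightarrow> nat \<Rightarrow> complex" where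
  "dual_F g E a = (\<lambda>i p. if p = g + a mod g then inv_mat E $$ (i, a div g) else 0)"

definition actX :: "nat \<Rightarrow> complex mat \<Rightarrow> (nat \<Rightarrow> nat \<Rightarrow> complex) \<Rightarrow> nat \<Rightarrow> nat \<Rightarrow> complex" where
  "actX g X c = (\<lambda>i q. \<Sum>p<2*g. X $$ (q, p) * c i p)"

definition spin :: "nat \<Rightarrow> nat \<Rightarrow> complex mat \<Rightarrow> complex mat \<Rightarrow> nat set \<Rightarrow> nat set \<Rightarrow> complex" where
  "spin n g E X = (\<lambda>S T. (1/2) * (\<Sum>a<2*n*g.
       op_comp (2*n*g) (cliff n g E (actX g X (basis_F g a))) (cliff n g E (dual_F g E a)) S T
     + op_comp (2*n*g) (cliff n g E (actX g X (dual_F g E a))) (cliff n g E (basis_F g a)) S T))"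

text \<open>Gram matrix of alpha in the basis (w_0..w_(g-1), w^0..w^(g-1)).\<close>
definition Omega :: "nat \<Rightarrow> complex mat" where
  "Omega g = four_block_mat (0\<^sub>m g g) (1\<^sub>m g) (- 1\<^sub>m g) (0\<^sub>m g g)"

definition sp_group :: "nat \<Rightarrow> complex mat set" where
  "sp_group g = {A \<in> carrier_mat (2*g) (2*g). transpose_mat A * Omega g * A = Omega g}"

definition sp_alg :: "nat \<Rightarrow> complex mat set" where
  "sp_alg g = {X \<in> carrier_mat (2*g) (2*g).
                 transpose_mat X * Omega g + Omega g * X = 0\<^sub>m (2*g) (2*g)}"

text \<open>GL(W*) inside Sp: M (matrix w.r.t. w^k) acts on W* as M and on W as (M^T)^(-1).\<close>
definition gl_emb :: "nat \<Rightarrow> complex mat \<Rightarrow> complex mat" where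
  "gl_emb g M = four_block_mat (inv_mat (transpose_mat M)) (0\<^sub>m g g) (0\<^sub>m g g) M"

definition GF :: "nat \<Rightarrow> complex mat \<Rightarrow> nat \<Rightarrow> nat \<Rightarrow> complex" where
  "GF g M = (\<lambda>a b. if a div g = b div g then inv_mat (transpose_mat M) $$ (a mod g, b mod g) else 0)"

definition vacuum :: "nat set \<Rightarrow> complex" where
  "vacuum = (\<lambda>S. if S = {} then 1 else 0)"

definition wedge_vec :: "nat \<Rightarrow> (nat \<Rightarrow> complex) \<Rightarrow> nat set \<Rightarrow> nat set \<Rightarrow> complex" where
  "wedge_vec N f = (\<lambda>S T. \<Sum>a<N. f a * wedge_op a S T)"

text \<open>Multiplicative extension of a linear map G of F to Lambda F:
  e_(t1) ^ ... ^ e_(tk) |-> G e_(t1) ^ ... ^ G e_(tk).\<close>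
definition ext_map :: "nat \<Rightarrow> (nat \<Rightarrow> nat \<Rightarrow> complex) \<Rightarrow> nat set \<Rightarrow> nat set \<Rightarrow> complex" where
  "ext_map N G = (\<lambda>S T. foldr (\<lambda>b x. op_app N (wedge_vec N (\<lambda>a. G a b)) x)
                                (sorted_list_of_set T) vacuum S)"

definition rho0 :: "nat \<Rightarrow> nat \<Rightarrow> complex mat \<Rightarrow> nat set \<Rightarrow> nat set \<Rightarrow> complex" where
  "rho0 n g M = ext_map (2*n*g) (GF g M)"

end

theory Submission
  imports Defs
begin


definition esgn :: "nat \<Rightarrow> nat set \<Rightarrow> complex" where
  "esgn a T = (-1) ^ card {b\<in>T. b < a}"

lemma sgn_sq[simp]: "esgn a T * esgn a T = 1"
  unfolding esgn_def by (simp flip: power_add add: power_even_eq[symmetric] power_mult)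

lemma wedge_app:
  assumes "S \<in> Pow {..<N}"
  shows "op_app N (wedge_op a) x S = (if a \<in> S then esgn a (S - {a}) * x (S - {a}) else 0)"
proof -
  have "\<And>U. wedge_op a S U * x U = (if U = S - {a} then (if a \<in> S then esgn a (S - {a}) * x (S - {a}) else 0) else 0)"
  proof -
    fix U show "wedge_op a S U * x U = (if U = S - {a} then (if a \<in> S then esgn a (S - {a}) * x (S - {a}) else 0) else 0)"
    proof (cases "a \<notin> U \<and> S = insert a U")
      case True then have "S - {a} = U" by auto
      then show ?thesis using True by (simp add: wedge_op_def esgn_def)
    next
      case False then show ?thesis by (auto simp: wedge_op_def)
    qed
  qed
  then have "op_app N (wedge_op a) x S = (\<Sum>U\<in>Pow {..<N}. (if U = S - {a} then (if a \<in> S then esgn a (S - {a}) * x (S - {a}) else 0) else 0))"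
    unfolding op_app_def by simp
  also have "\<dots> = (if a \<in> S then esgn a (S - {a}) * x (S - {a}) else 0)"
    using assms by (subst sum.delta) auto
  finally show ?thesis .
qed

lemma contr_app:
  assumes "S \<in> Pow {..<N}" "a < N"
  shows "op_app N (contr_op a) x S = (if a \<notin> S then esgn a S * x (insert a S) else 0)"
proof -
  have c: "{b \<in> insert a S. b < a} = {b\<in>S. b < a}" by auto
  have "\<And>U. contr_op a S U * x U = (if U = insert a S then (if a \<notin> S then esgn a S * x (insert a S) else 0) else 0)"
    unfolding contr_op_def esgn_def using c by auto
  then have "op_app N (contr_op a) x S = (\<Sum>U\<in>Pow {..<N}. (if U = insert a S then (if a \<notin> S then esgn a S * x (insert a S) else 0) else 0))"
    unfolding op_app_def by simp
  also have "\<dots> = (if a \<notin> S then esgn a S * x (insert a S) else 0)"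
    using assms by (subst sum.delta) auto
  finally show ?thesis .
qed

lemma sgn_insert: "b \<notin> T \<Longrightarrow> finite T \<Longrightarrow> esgn a (insert b T) = (if b < a then - esgn a T else esgn a T)"
proof -
  assume "b \<notin> T" "finite T"
  then show ?thesis
  proof (cases "b < a")
    case True
    then have "{x \<in> insert b T. x < a} = insert b {x\<in>T. x < a}" by auto
    then show ?thesis using True \<open>b \<notin> T\<close> \<open>finite T\<close> unfolding esgn_def by simp
  next
    case False
    then have "{x \<in> insert b T. x < a} = {x\<in>T. x < a}" by auto
    then show ?thesis using False unfolding esgn_def by simp
  qed
qed

lemma sgn_remove: "b \<in> T \<Longrightarrow> finite T \<Longrightarrow> esgn a T = (if b < a then - esgn a (T - {b}) else esgn a (T - {b}))"
  using sgn_insert[of b "T - {b}" a] by (simp add: insert_absorb)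

lemma sgn_remove_self: "esgn a (T - {a}) = esgn a T"
proof -
  have "{x \<in> T - {a}. x < a} = {x \<in> T. x < a}" by auto
  then show ?thesis unfolding esgn_def by simp
qed

abbreviation W where "W N a x \<equiv> op_app N (wedge_op a) x"
abbreviation C where "C N a x \<equiv> op_app N (contr_op a) x"

lemma wedge_anti:
  assumes "S \<in> Pow {..<N}"
  shows "W N a (W N b x) S = - W N b (W N a x) S"
proof -
  have SP: "S - {a} \<in> Pow {..<N}" "S - {b} \<in> Pow {..<N}" using assms by auto
  have fin: "finite S" using assms finite_subset by auto
  show ?thesis
  proof (cases "a \<in> S \<and> b \<in> S \<and> a \<noteq> b")
    case True
    have e: "S - {a} - {b} = S - {b} - {a}" by auto
    have s1: "esgn a (S - {a}) = (if b < a then - esgn a (S - {a} - {b}) else esgn a (S - {a} - {b}))"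
      using True fin by (intro sgn_remove) auto
    have s2: "esgn b (S - {b}) = (if a < b then - esgn b (S - {b} - {a}) else esgn b (S - {b} - {a}))"
      using True fin by (intro sgn_remove) auto
    show ?thesis using True
      by (simp add: wedge_app[OF assms] wedge_app[OF SP(1)] wedge_app[OF SP(2)] s1 s2 e)
  next
    case False
    then show ?thesis
      by (auto simp: wedge_app[OF assms] wedge_app[OF SP(1)] wedge_app[OF SP(2)])
  qed
qed

lemma clifford:
  assumes "S \<in> Pow {..<N}" "a < N" "b < N"
  shows "C N a (W N b x) S + W N b (C N a x) S = (if a = b then x S else 0)"
proof -
  have fin: "finite S" using assms finite_subset by auto
  have P1: "insert a S \<in> Pow {..<N}" using assms by auto
  have P2: "S - {b} \<in> Pow {..<N}" using assms by auto
  show ?thesis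
  proof (cases "a = b")
    case True
    then show ?thesis
      using assms fin by (auto simp: contr_app wedge_app contr_app[OF P2 assms(3)] sgn_remove_self insert_absorb)
  next
    case False
    show ?thesis
    proof (cases "a \<notin> S \<and> b \<in> S")
      case True
      have e: "insert a S - {b} = insert a (S - {b})" using False by auto
      have s1: "esgn b (insert a S - {b}) = (if a < b then - esgn b (S - {b}) else esgn b (S - {b}))"
        unfolding e using True fin by (intro sgn_insert) auto
      have s2: "esgn a S = (if b < a then - esgn a (S - {b}) else esgn a (S - {b}))"
        using True fin by (intro sgn_remove) auto
      have e2: "insert a (S - {b}) = insert a S - {b}" using False by auto
      show ?thesis using True False
        by (simp add: contr_app[OF assms(1,2)] wedge_app[OF assms(1)] wedge_app[OF P1] contr_app[OF P2 assms(2)] s1 s2 e2)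
    next
      case F2: False
      then show ?thesis using False
        by (auto simp: contr_app[OF assms(1,2)] wedge_app[OF assms(1)] wedge_app[OF P1] contr_app[OF P2 assms(2)])
    qed
  qed
qed


definition basis :: "nat set \<Rightarrow> nat set \<Rightarrow> complex" where
  "basis T = (\<lambda>S. if S = T then 1 else 0)"

lemma op_app_cong:
  assumes "\<And>U. U \<in> Pow {..<N} \<Longrightarrow> x U = y U"
  shows "op_app N P x = op_app N P y"
  unfolding op_app_def using assms by (intro ext sum.cong) auto

lemma op_app_add: "op_app N P (\<lambda>U. x U + y U) S = op_app N P x S + op_app N P y S"
  unfolding op_app_def by (simp add: distrib_left sum.distrib)

lemma op_app_scale: "op_app N P (\<lambda>U. c * x U) S = c * op_app N P x S"
  unfolding op_app_def by (simp add: sum_distrib_left algebra_simps)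

lemma op_app_sum: "op_app N P (\<lambda>U. \<Sum>i\<in>I. y i U) S = (\<Sum>i\<in>I. op_app N P (y i) S)"
  unfolding op_app_def by (simp add: sum_distrib_left) (rule sum.swap)

lemma op_app_zero: "op_app N P (\<lambda>U. 0) S = 0"
  unfolding op_app_def by simp

definition wv :: "nat \<Rightarrow> (nat \<Rightarrow> complex) \<Rightarrow> (nat set \<Rightarrow> complex) \<Rightarrow> nat set \<Rightarrow> complex" where
  "wv N f x = op_app N (wedge_vec N f) x"

lemma wv_expand: "wv N f x S = (\<Sum>a<N. f a * W N a x S)"
  unfolding wv_def op_app_def wedge_vec_def by (simp add: sum_distrib_left sum_distrib_right mult.assoc) (rule sum.swap)

lemma wv_cong: "(\<And>U. U \<in> Pow {..<N} \<Longrightarrow> x U = y U) \<Longrightarrow> wv N f x = wv N f y"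
  unfolding wv_def by (rule op_app_cong)

lemma wv_scale: "wv N f (\<lambda>U. c * x U) S = c * wv N f x S"
  unfolding wv_def by (rule op_app_scale)

lemma wv_sum: "wv N f (\<lambda>U. \<Sum>i\<in>I. y i U) S = (\<Sum>i\<in>I. wv N f (y i) S)"
  unfolding wv_def by (rule op_app_sum)

lemma wv_zero: "wv N f (\<lambda>U. 0) S = 0"
  unfolding wv_def by (rule op_app_zero)

lemma W_wv: "W N a (wv N h x) S = (\<Sum>b<N. h b * W N a (W N b x) S)"
proof -
  have eq: "wv N h x = (\<lambda>U. \<Sum>b<N. h b * W N b x U)" by (rule ext) (rule wv_expand)
  have "W N a (wv N h x) S = W N a (\<lambda>U. \<Sum>b<N. h b * W N b x U) S"
    by (simp only: eq)
  also have "\<dots> = (\<Sum>b<N. W N a (\<lambda>U. h b * W N b x U) S)" by (rule op_app_sum)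
  also have "\<dots> = (\<Sum>b<N. h b * W N a (W N b x) S)" by (simp add: op_app_scale)
  finally show ?thesis .
qed

lemma wv_anti:
  assumes "S \<in> Pow {..<N}"
  shows "wv N f (wv N h x) S = - wv N h (wv N f x) S"
proof -
  have "wv N f (wv N h x) S = (\<Sum>a<N. \<Sum>b<N. f a * (h b * W N a (W N b x) S))"
    unfolding wv_expand[of N f] W_wv sum_distrib_left ..
  also have "\<dots> = (\<Sum>a<N. \<Sum>b<N. - (f a * (h b * W N b (W N a x) S)))"
    by (intro sum.cong refl) (subst wedge_anti[OF assms], simp)
  also have "\<dots> = - (\<Sum>a<N. \<Sum>b<N. f a * (h b * W N b (W N a x) S))"
    by (simp only: sum_negf)
  also have "(\<Sum>a<N. \<Sum>b<N. f a * (h b * W N b (W N a x) S)) = (\<Sum>b<N. \<Sum>a<N. h b * (f a * W N b (W N a x) S))"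
    by (subst sum.swap) (simp only: mult.left_commute)
  also have "\<dots> = wv N h (wv N f x) S"
    unfolding wv_expand[of N h] W_wv sum_distrib_left ..
  finally show ?thesis .
qed

lemma wv_self:
  assumes "S \<in> Pow {..<N}"
  shows "wv N f (wv N f x) S = 0"
proof -
  have "wv N f (wv N f x) S = - wv N f (wv N f x) S" by (rule wv_anti[OF assms])
  then show ?thesis by simp
qed

definition phi :: "nat \<Rightarrow> (nat \<Rightarrow> nat \<Rightarrow> complex) \<Rightarrow> nat \<Rightarrow> (nat set \<Rightarrow> complex) \<Rightarrow> nat set \<Rightarrow> complex" where
  "phi N G b x = wv N (\<lambda>a. G a b) x"

lemma phi_cong: "(\<And>U. U \<in> Pow {..<N} \<Longrightarrow> x U = y U) \<Longrightarrow> phi N G b x = phi N G b y"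
  unfolding phi_def by (rule wv_cong)

lemma phi_scale: "phi N G b (\<lambda>U. c * x U) S = c * phi N G b x S"
  unfolding phi_def by (rule wv_scale)

lemma ext_map_foldr: "ext_map N G S T = foldr (phi N G) (sorted_list_of_set T) vacuum S"
  unfolding ext_map_def phi_def wv_def by simp

lemma foldr_cong:
  assumes "\<And>U. U \<in> Pow {..<N} \<Longrightarrow> x U = y U"
  shows "U \<in> Pow {..<N} \<Longrightarrow> foldr (phi N G) xs x U = foldr (phi N G) xs y U"
proof (induction xs arbitrary: U)
  case Nil then show ?case using assms by simp
next
  case (Cons b xs)
  have "phi N G b (foldr (phi N G) xs x) = phi N G b (foldr (phi N G) xs y)"
    by (rule phi_cong) (use Cons in auto)
  then show ?case by simp
qed

lemma foldr_scale:
  "U \<in> Pow {..<N} \<Longrightarrow> foldr (phi N G) xs (\<lambda>V. c * x V) U = c * foldr (phi N G) xs x U"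
proof (induction xs arbitrary: U)
  case Nil then show ?case by simp
next
  case (Cons b xs)
  have "phi N G b (foldr (phi N G) xs (\<lambda>V. c * x V)) U = phi N G b (\<lambda>V. c * foldr (phi N G) xs x V) U"
    by (rule fun_cong[OF phi_cong]) (use Cons in auto)
  also have "\<dots> = c * phi N G b (foldr (phi N G) xs x) U" by (rule phi_scale)
  finally show ?case by simp
qed

lemma foldr_zero:
  "U \<in> Pow {..<N} \<Longrightarrow> foldr (phi N G) xs (\<lambda>V. 0) U = 0"
  using foldr_scale[of U N G xs 0 "\<lambda>V. 0"] by simp

lemma wv_foldr:
  "U \<in> Pow {..<N} \<Longrightarrow> wv N f (foldr (phi N G) xs y) U = (-1)^length xs * foldr (phi N G) xs (wv N f y) U"
proof (induction xs arbitrary: U)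
  case Nil then show ?case by simp
next
  case (Cons b xs)
  have "wv N f (foldr (phi N G) (b # xs) y) U = - phi N G b (wv N f (foldr (phi N G) xs y)) U"
    unfolding phi_def foldr.simps o_apply by (rule wv_anti[OF Cons.prems])
  also have "phi N G b (wv N f (foldr (phi N G) xs y)) U =
      phi N G b (\<lambda>V. (-1)^length xs * foldr (phi N G) xs (wv N f y) V) U"
    by (rule fun_cong[OF phi_cong]) (use Cons in auto)
  also have "\<dots> = (-1)^length xs * phi N G b (foldr (phi N G) xs (wv N f y)) U"
    by (rule phi_scale)
  finally show ?case by simp
qed

lemma phi_foldr:
  "U \<in> Pow {..<N} \<Longrightarrow> phi N G a (foldr (phi N G) xs y) U = (-1)^length xs * foldr (phi N G) xs (phi N G a y) U"
  using wv_foldr[of U N "\<lambda>c. G c a" G xs y] unfolding phi_def .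

lemma sorted_insert_split:
  assumes "finite T" "a \<notin> T"
  shows "sorted_list_of_set (insert a T) =
     filter (\<lambda>x. x < a) (sorted_list_of_set T) @ a # filter (\<lambda>x. a < x) (sorted_list_of_set T)"
proof -
  let ?L = "sorted_list_of_set T"
  let ?M = "filter (\<lambda>x. x < a) ?L @ a # filter (\<lambda>x. a < x) ?L"
  have s: "sorted ?M" using sorted_filter[of id] by (auto simp: sorted_append sorted_wrt_filter)
  have d: "distinct ?M" using assms by auto
  have L: "set (sorted_list_of_set T) = T" using assms by simp
  have st: "set ?M = insert a T" unfolding set_append set_filter L using assms linorder_neqE_nat by auto
  from sorted_list_of_set.idem_if_sorted_distinct[OF s d] show ?thesis unfolding st .
qed

lemma sorted_split:
  assumes "finite T" "a \<notin> T"
  shows "sorted_list_of_set T =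
     filter (\<lambda>x. x < a) (sorted_list_of_set T) @ filter (\<lambda>x. a < x) (sorted_list_of_set T)"
proof -
  let ?L = "sorted_list_of_set T"
  let ?M = "filter (\<lambda>x. x < a) ?L @ filter (\<lambda>x. a < x) ?L"
  have s: "sorted ?M" by (auto simp: sorted_append sorted_wrt_filter)
  have d: "distinct ?M" using assms by auto
  have L: "set (sorted_list_of_set T) = T" using assms by simp
  have st: "set ?M = T" unfolding set_append set_filter L using assms by (force simp: not_less order_le_less)
  from sorted_list_of_set.idem_if_sorted_distinct[OF s d] show ?thesis unfolding st by simp
qed

lemma length_filter_less:
  assumes "finite T" shows "length (filter (\<lambda>x. x < a) (sorted_list_of_set T)) = card {b\<in>T. b < a}"
proof -
  have "length (filter (\<lambda>x. x < a) (sorted_list_of_set T)) = card (set (filter (\<lambda>x. x < a) (sorted_list_of_set T)))"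
    by (rule distinct_card[symmetric]) simp
  also have "set (filter (\<lambda>x. x < a) (sorted_list_of_set T)) = {b\<in>T. b < a}" using assms by auto
  finally show ?thesis .
qed

lemma ext_insert:
  assumes "T \<in> Pow {..<N}" "a \<notin> T" "S \<in> Pow {..<N}"
  shows "foldr (phi N G) (sorted_list_of_set (insert a T)) vacuum S =
         esgn a T * wv N (\<lambda>c. G c a) (foldr (phi N G) (sorted_list_of_set T) vacuum) S"
proof -
  have fin: "finite T" using assms finite_subset by auto
  let ?ys = "filter (\<lambda>x. x < a) (sorted_list_of_set T)"
  let ?zs = "filter (\<lambda>x. a < x) (sorted_list_of_set T)"
  have "wv N (\<lambda>c. G c a) (foldr (phi N G) (sorted_list_of_set T) vacuum) S =
        wv N (\<lambda>c. G c a) (foldr (phi N G) ?ys (foldr (phi N G) ?zs vacuum)) S"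
    by (subst sorted_split[OF fin assms(2)]) simp
  also have "\<dots> = (-1)^length ?ys * foldr (phi N G) ?ys (phi N G a (foldr (phi N G) ?zs vacuum)) S"
    using phi_foldr[OF assms(3), of G a ?ys] unfolding phi_def .
  also have "\<dots> = esgn a T * foldr (phi N G) (sorted_list_of_set (insert a T)) vacuum S"
    by (simp add: sorted_insert_split[OF fin assms(2)] length_filter_less[OF fin] esgn_def)
  finally show ?thesis by (simp add: mult.assoc[symmetric])
qed

lemma ext_mem:
  assumes "T \<in> Pow {..<N}" "a \<in> T" "S \<in> Pow {..<N}"
  shows "wv N (\<lambda>c. G c a) (foldr (phi N G) (sorted_list_of_set T) vacuum) S = 0"
proof -
  have fin: "finite (T - {a})" using assms finite_subset by auto
  have TT: "T = insert a (T - {a})" using assms by auto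
  let ?L = "sorted_list_of_set (T - {a})"
  let ?ys = "filter (\<lambda>x. x < a) ?L"
  let ?zs = "filter (\<lambda>x. a < x) ?L"
  have "wv N (\<lambda>c. G c a) (foldr (phi N G) (sorted_list_of_set T) vacuum) S =
        wv N (\<lambda>c. G c a) (foldr (phi N G) ?ys (phi N G a (foldr (phi N G) ?zs vacuum))) S"
    by (subst TT, subst sorted_insert_split[OF fin]) simp_all
  also have "\<dots> = (-1)^length ?ys * foldr (phi N G) ?ys (wv N (\<lambda>c. G c a) (phi N G a (foldr (phi N G) ?zs vacuum))) S"
    using phi_foldr[OF assms(3), of G a ?ys] unfolding phi_def .
  also have "foldr (phi N G) ?ys (wv N (\<lambda>c. G c a) (phi N G a (foldr (phi N G) ?zs vacuum))) S
      = foldr (phi N G) ?ys (\<lambda>V. 0) S"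
    by (rule foldr_cong[OF _ assms(3)]) (simp add: phi_def wv_self)
  also have "\<dots> = 0" by (rule foldr_zero[OF assms(3)])
  finally show ?thesis by simp
qed

lemma ext_W:
  assumes "T \<in> Pow {..<N}" "S \<in> Pow {..<N}" "a < N"
  shows "op_app N (ext_map N G) (W N a (basis T)) S =
         wv N (\<lambda>c. G c a) (\<lambda>U. ext_map N G U T) S"
proof -
  have pw: "\<And>U. U \<in> Pow {..<N} \<Longrightarrow> ext_map N G S U * W N a (basis T) U =
        (if U = insert a T then (if a \<notin> T then ext_map N G S U * esgn a T else 0) else 0)"
  proof -
    fix U :: "nat set" assume U: "U \<in> Pow {..<N}"
    show "ext_map N G S U * W N a (basis T) U =
        (if U = insert a T then (if a \<notin> T then ext_map N G S U * esgn a T else 0) else 0)"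
      by (auto simp: wedge_app[OF U] basis_def insert_Diff_if)
  qed
  have "op_app N (ext_map N G) (W N a (basis T)) S =
        (\<Sum>U\<in>Pow {..<N}. if U = insert a T then (if a \<notin> T then ext_map N G S U * esgn a T else 0) else 0)"
    unfolding op_app_def[of N "ext_map N G"] by (rule sum.cong[OF refl pw])
  also have "\<dots> = (if a \<notin> T then ext_map N G S (insert a T) * esgn a T else 0)"
    using assms by (subst sum.delta) auto
  also have "\<dots> = wv N (\<lambda>c. G c a) (\<lambda>U. ext_map N G U T) S"
    using ext_insert[OF assms(1) _ assms(2), of a G] ext_mem[OF assms(1) _ assms(2), of a G]
    by (auto simp: ext_map_foldr)
  finally show ?thesis .
qed

lemma vec_decomp: "op_app N P x S = (\<Sum>T\<in>Pow {..<N}. x T * op_app N P (basis T) S)"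
proof -
  have "\<And>T. op_app N P (basis T) S = (if T \<in> Pow {..<N} then P S T else 0)"
    unfolding op_app_def basis_def by (simp add: if_distrib cong: if_cong)
  then show ?thesis unfolding op_app_def by (simp add: mult.commute)
qed

lemma W_decomp: "U \<in> Pow {..<N} \<Longrightarrow> W N a x U = (\<Sum>T\<in>Pow {..<N}. x T * W N a (basis T) U)"
  by (rule vec_decomp)

lemma ext_wv:
  assumes "S \<in> Pow {..<N}"
  shows "op_app N (ext_map N G) (wv N f x) S =
         wv N (\<lambda>c. \<Sum>a<N. G c a * f a) (op_app N (ext_map N G) x) S"
proof -
  have "op_app N (ext_map N G) (wv N f x) S =
        op_app N (ext_map N G) (\<lambda>U. \<Sum>a<N. \<Sum>T\<in>Pow {..<N}. f a * x T * W N a (basis T) U) S"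
    by (rule fun_cong[OF op_app_cong]) (simp add: wv_expand W_decomp sum_distrib_left algebra_simps)
  also have "\<dots> = (\<Sum>a<N. \<Sum>T\<in>Pow {..<N}. f a * x T * op_app N (ext_map N G) (W N a (basis T)) S)"
    by (simp add: op_app_sum op_app_scale)
  also have "\<dots> = (\<Sum>a<N. \<Sum>T\<in>Pow {..<N}. f a * x T * wv N (\<lambda>c. G c a) (\<lambda>U. ext_map N G U T) S)"
    using ext_W[OF _ assms] by (intro sum.cong refl) auto
  also have "\<dots> = (\<Sum>a<N. f a * wv N (\<lambda>c. G c a) (op_app N (ext_map N G) x) S)"
  proof (rule sum.cong[OF refl])
    fix a
    have "wv N (\<lambda>c. G c a) (op_app N (ext_map N G) x) S =
          wv N (\<lambda>c. G c a) (\<lambda>U. \<Sum>T\<in>Pow {..<N}. x T * ext_map N G U T) S"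
      unfolding op_app_def by (simp add: mult.commute)
    also have "\<dots> = (\<Sum>T\<in>Pow {..<N}. x T * wv N (\<lambda>c. G c a) (\<lambda>U. ext_map N G U T) S)"
      by (simp add: wv_sum wv_scale)
    finally show "(\<Sum>T\<in>Pow {..<N}. f a * x T * wv N (\<lambda>c. G c a) (\<lambda>U. ext_map N G U T) S) =
         f a * wv N (\<lambda>c. G c a) (op_app N (ext_map N G) x) S"
      by (simp add: sum_distrib_left algebra_simps)
  qed
  also have "\<dots> = wv N (\<lambda>c. \<Sum>a<N. G c a * f a) (op_app N (ext_map N G) x) S"
    unfolding wv_expand sum_distrib_left sum_distrib_right by (rule trans[OF sum.swap]) (simp add: algebra_simps)
  finally show ?thesis .
qed

definition mprod :: "nat \<Rightarrow> (nat \<Rightarrow> nat \<Rightarrow> complex) \<Rightarrow> (nat \<Rightarrow> nat \<Rightarrow> complex) \<Rightarrow> nat \<Rightarrow> nat \<Rightarrow> complex" where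
  "mprod N G H = (\<lambda>a b. \<Sum>c<N. G a c * H c b)"

lemma ext_foldr_hom:
  "S \<in> Pow {..<N} \<Longrightarrow> op_app N (ext_map N G) (foldr (phi N H) xs vacuum) S = foldr (phi N (mprod N G H)) xs vacuum S"
proof (induction xs arbitrary: S)
  case Nil
  have 1: "op_app N (ext_map N G) vacuum S = ext_map N G S {}"
    unfolding op_app_def vacuum_def by (simp add: if_distrib cong: if_cong)
  have 2: "ext_map N G S {} = vacuum S" by (simp add: ext_map_foldr)
  show ?case using 1 2 by simp
next
  case (Cons b xs)
  have e: "(\<lambda>c. \<Sum>a<N. G c a * H a b) = (\<lambda>c. mprod N G H c b)" by (simp add: mprod_def)
  have "op_app N (ext_map N G) (foldr (phi N H) (b # xs) vacuum) S =
        op_app N (ext_map N G) (wv N (\<lambda>a. H a b) (foldr (phi N H) xs vacuum)) S"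
    unfolding foldr_Cons o_apply phi_def[of N H b] ..
  also have "\<dots> = wv N (\<lambda>c. \<Sum>a<N. G c a * H a b) (op_app N (ext_map N G) (foldr (phi N H) xs vacuum)) S"
    by (rule ext_wv[OF Cons.prems])
  also have "\<dots> = wv N (\<lambda>c. mprod N G H c b) (foldr (phi N (mprod N G H)) xs vacuum) S"
    unfolding e by (rule fun_cong[OF wv_cong]) (use Cons.IH in auto)
  also have "\<dots> = foldr (phi N (mprod N G H)) (b # xs) vacuum S"
    unfolding foldr_Cons o_apply phi_def[of N "mprod N G H" b] ..
  finally show ?case .
qed

lemma ext_map_hom:
  assumes "S \<in> Pow {..<N}"
  shows "op_comp N (ext_map N G) (ext_map N H) S T = ext_map N (mprod N G H) S T"
proof -
  have "op_comp N (ext_map N G) (ext_map N H) S T = op_app N (ext_map N G) (foldr (phi N H) (sorted_list_of_set T) vacuum) S"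
    unfolding op_comp_def op_app_def by (simp add: ext_map_foldr)
  also have "\<dots> = ext_map N (mprod N G H) S T" using ext_foldr_hom[OF assms] by (simp add: ext_map_foldr)
  finally show ?thesis .
qed

definition idm :: "nat \<Rightarrow> nat \<Rightarrow> complex" where "idm = (\<lambda>a b. if a = b then 1 else 0)"

lemma phi_id: assumes "b < N" shows "phi N idm b x = W N b x"
proof -
  have "\<And>S U. (\<Sum>a<N. idm a b * wedge_op a S U) = wedge_op b S U"
  proof -
    fix S U
    have "(\<Sum>a<N. idm a b * wedge_op a S U) = (\<Sum>a<N. if a = b then wedge_op a S U else 0)"
      unfolding idm_def by (intro sum.cong) auto
    also have "\<dots> = wedge_op b S U" using assms by (subst sum.delta) auto
    finally show "(\<Sum>a<N. idm a b * wedge_op a S U) = wedge_op b S U" .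
  qed
  then show ?thesis unfolding phi_def wv_def wedge_vec_def by simp
qed

lemma foldr_id:
  "sorted xs \<Longrightarrow> distinct xs \<Longrightarrow> set xs \<subseteq> {..<N} \<Longrightarrow> S \<in> Pow {..<N} \<Longrightarrow>
   foldr (phi N idm) xs vacuum S = basis (set xs) S"
proof (induction xs arbitrary: S)
  case Nil then show ?case by (simp add: vacuum_def basis_def)
next
  case (Cons b xs)
  have bN: "b < N" using Cons by auto
  have "foldr (phi N idm) (b # xs) vacuum S = W N b (foldr (phi N idm) xs vacuum) S"
    by (simp add: phi_id[OF bN])
  also have "\<dots> = W N b (basis (set xs)) S"
    by (rule fun_cong[OF op_app_cong]) (use Cons in auto)
  also have "\<dots> = basis (set (b # xs)) S"
  proof -
    have e: "{c \<in> set xs. c < b} = {}" using Cons.prems by auto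
    have s: "esgn b (set xs) = 1" unfolding esgn_def e by simp
    show ?thesis using Cons.prems s
      by (auto simp: wedge_app[OF Cons.prems(4)] basis_def)
  qed
  finally show ?case .
qed

lemma ext_map_id:
  assumes "S \<in> Pow {..<N}" "T \<in> Pow {..<N}"
  shows "ext_map N idm S T = (if S = T then 1 else 0)"
proof -
  have fin: "finite T" using assms finite_subset by auto
  show ?thesis unfolding ext_map_foldr
    using foldr_id[of "sorted_list_of_set T" N S] assms fin by (auto simp: basis_def)
qed


definition Der :: "nat \<Rightarrow> (nat \<Rightarrow> nat \<Rightarrow> complex) \<Rightarrow> (nat set \<Rightarrow> complex) \<Rightarrow> nat set \<Rightarrow> complex" where
  "Der N Z x = (\<lambda>S. \<Sum>a<N. \<Sum>c<N. Z a c * W N a (C N c x) S)"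

lemma Der_cong: "(\<And>U. U \<in> Pow {..<N} \<Longrightarrow> x U = y U) \<Longrightarrow> Der N Z x = Der N Z y"
proof -
  assume h: "\<And>U. U \<in> Pow {..<N} \<Longrightarrow> x U = y U"
  have "\<And>c. C N c x = C N c y" by (rule op_app_cong) (rule h)
  then show ?thesis unfolding Der_def by simp
qed

lemma Der_W:
  assumes S: "S \<in> Pow {..<N}" and b: "b < N"
  shows "Der N Z (W N b y) S = wv N (\<lambda>a. Z a b) y S + W N b (Der N Z y) S"
proof -
  have cl: "\<And>c U. c < N \<Longrightarrow> U \<in> Pow {..<N} \<Longrightarrow> C N c (W N b y) U = (if c = b then y U else 0) + (-1) * W N b (C N c y) U"
  proof -
    fix c U assume c: "c < N" and U: "U \<in> Pow {..<N}"
    have h: "C N c (W N b y) U + W N b (C N c y) U = (if c = b then y U else 0)" by (rule clifford[OF U c b])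
    have "C N c (W N b y) U = (if c = b then y U else 0) - W N b (C N c y) U"
      using h by (simp only: eq_diff_eq)
    then show "C N c (W N b y) U = (if c = b then y U else 0) + (-1) * W N b (C N c y) U" by simp
  qed
  have "\<And>a c. c < N \<Longrightarrow> W N a (C N c (W N b y)) S = W N a (\<lambda>U. (if c = b then y U else 0) + (-1) * W N b (C N c y) U) S"
    by (rule fun_cong[OF op_app_cong]) (simp add: cl)
  also have "\<And>a c. W N a (\<lambda>U. (if c = b then y U else 0) + (-1) * W N b (C N c y) U) S
      = (if c = b then W N a y S else 0) + W N b (W N a (C N c y)) S"
  proof -
    fix a c
    have "W N a (\<lambda>U. (if c = b then y U else 0) + (-1) * W N b (C N c y) U) S
       = W N a (\<lambda>U. (if c = b then y U else 0)) S + (-1) * W N a (W N b (C N c y)) S"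
      by (simp only: op_app_add op_app_scale)
    also have "W N a (\<lambda>U. (if c = b then y U else 0)) S = (if c = b then W N a y S else 0)"
      by (cases "c = b") (simp_all add: op_app_zero)
    also have "W N a (W N b (C N c y)) S = - W N b (W N a (C N c y)) S" by (rule wedge_anti[OF S])
    finally show "W N a (\<lambda>U. (if c = b then y U else 0) + (-1) * W N b (C N c y) U) S
      = (if c = b then W N a y S else 0) + W N b (W N a (C N c y)) S" by simp
  qed
  finally have step: "\<And>a c. c < N \<Longrightarrow> W N a (C N c (W N b y)) S = (if c = b then W N a y S else 0) + W N b (W N a (C N c y)) S" .
  have "Der N Z (W N b y) S = (\<Sum>a<N. \<Sum>c<N. Z a c * ((if c = b then W N a y S else 0) + W N b (W N a (C N c y)) S))"
    unfolding Der_def using step by (intro sum.cong refl) auto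
  also have "\<dots> = (\<Sum>a<N. \<Sum>c<N. (if c = b then Z a c * W N a y S else 0) + Z a c * W N b (W N a (C N c y)) S)"
    by (intro sum.cong refl) (simp add: distrib_left)
  also have "\<dots> = (\<Sum>a<N. \<Sum>c<N. (if c = b then Z a c * W N a y S else 0)) + (\<Sum>a<N. \<Sum>c<N. Z a c * W N b (W N a (C N c y)) S)"
    by (simp only: sum.distrib)
  also have "(\<Sum>a<N. \<Sum>c<N. (if c = b then Z a c * W N a y S else 0)) = wv N (\<lambda>a. Z a b) y S"
    unfolding wv_expand using b by (intro sum.cong refl) (simp add: sum.delta')
  also have "(\<Sum>a<N. \<Sum>c<N. Z a c * W N b (W N a (C N c y)) S) = W N b (Der N Z y) S"
    unfolding Der_def by (simp add: op_app_sum op_app_scale)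
  finally show ?thesis .
qed

lemma op_app_deriv:
  assumes "\<And>U. U \<in> Pow {..<N} \<Longrightarrow> ((\<lambda>t. x t U) has_vector_derivative x' U) F"
  shows "((\<lambda>t. op_app N P (x t) S) has_vector_derivative op_app N P x' S) F"
  unfolding op_app_def by (intro has_vector_derivative_sum has_vector_derivative_mult_right assms) auto

lemma foldr_H0:
  assumes "\<forall>a<N. \<forall>b<N. H0 a b = idm a b" "set xs \<subseteq> {..<N}"
  shows "foldr (phi N H0) xs y = foldr (phi N idm) xs y"
  using assms(2)
proof (induction xs)
  case Nil then show ?case by simp
next
  case (Cons b xs)
  have "phi N H0 b = phi N idm b"
    unfolding phi_def wv_def wedge_vec_def using assms(1) Cons.prems by auto
  then show ?case using Cons by simp
qed

lemma foldr_deriv: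
  assumes H0: "\<forall>a<N. \<forall>b<N. H 0 a b = idm a b"
    and HD: "\<forall>a<N. \<forall>b<N. ((\<lambda>t. H t a b) has_vector_derivative Z a b) (at 0)"
  shows "set xs \<subseteq> {..<N} \<Longrightarrow> S \<in> Pow {..<N} \<Longrightarrow>
    ((\<lambda>t. foldr (phi N (H t)) xs vacuum S) has_vector_derivative Der N Z (foldr (phi N idm) xs vacuum) S) (at 0)"
proof (induction xs arbitrary: S)
  case Nil
  have "\<And>a c. c < N \<Longrightarrow> W N a (C N c vacuum) S = 0"
  proof -
    fix a c assume c: "c < N"
    have "W N a (C N c vacuum) S = W N a (\<lambda>U. 0) S"
      by (rule fun_cong[OF op_app_cong]) (simp add: contr_app[OF _ c] vacuum_def)
    then show "W N a (C N c vacuum) S = 0" by (simp add: op_app_zero)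
  qed
  then have "Der N Z vacuum S = 0" unfolding Der_def by simp
  then show ?case by (simp add: has_vector_derivative_const)
next
  case (Cons b xs)
  have bN: "b < N" and xsN: "set xs \<subseteq> {..<N}" using Cons.prems by auto
  have F0: "foldr (phi N (H 0)) xs vacuum = foldr (phi N idm) xs vacuum"
    by (rule foldr_H0[OF H0 xsN])
  have e: "\<And>t. foldr (phi N (H t)) (b # xs) vacuum S = (\<Sum>a<N. H t a b * W N a (foldr (phi N (H t)) xs vacuum) S)"
    by (simp add: phi_def wv_expand)
  have "((\<lambda>t. \<Sum>a<N. H t a b * W N a (foldr (phi N (H t)) xs vacuum) S) has_vector_derivative
        (\<Sum>a<N. H 0 a b * W N a (Der N Z (foldr (phi N idm) xs vacuum)) S + Z a b * W N a (foldr (phi N (H 0)) xs vacuum) S)) (at 0)"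
  proof (intro has_vector_derivative_sum has_vector_derivative_mult)
    fix a assume "a \<in> {..<N}"
    then show "((\<lambda>t. H t a b) has_vector_derivative Z a b) (at 0)" using HD bN by auto
    show "((\<lambda>t. W N a (foldr (phi N (H t)) xs vacuum) S) has_vector_derivative
          W N a (Der N Z (foldr (phi N idm) xs vacuum)) S) (at 0)"
      by (rule op_app_deriv) (rule Cons.IH[OF xsN], simp)
  qed
  also have "(\<Sum>a<N. H 0 a b * W N a (Der N Z (foldr (phi N idm) xs vacuum)) S + Z a b * W N a (foldr (phi N (H 0)) xs vacuum) S)
      = W N b (Der N Z (foldr (phi N idm) xs vacuum)) S + wv N (\<lambda>a. Z a b) (foldr (phi N idm) xs vacuum) S"
  proof -
    have "(\<Sum>a<N. H 0 a b * W N a (Der N Z (foldr (phi N idm) xs vacuum)) S) = 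
          (\<Sum>a<N. if a = b then W N a (Der N Z (foldr (phi N idm) xs vacuum)) S else 0)"
      using H0 bN by (intro sum.cong refl) (auto simp: idm_def)
    also have "\<dots> = W N b (Der N Z (foldr (phi N idm) xs vacuum)) S" using bN by simp
    finally show ?thesis by (simp add: sum.distrib F0 wv_expand)
  qed
  also have "\<dots> = Der N Z (W N b (foldr (phi N idm) xs vacuum)) S"
    using Der_W[OF Cons.prems(2) bN] by simp
  also have "\<dots> = Der N Z (foldr (phi N idm) (b # xs) vacuum) S"
    by (simp add: phi_id[OF bN])
  finally show ?case unfolding e .
qed

lemma ext_deriv:
  assumes H0: "\<forall>a<N. \<forall>b<N. H 0 a b = idm a b"
    and HD: "\<forall>a<N. \<forall>b<N. ((\<lambda>t. H t a b) has_vector_derivative Z a b) (at 0)"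
    and S: "S \<in> Pow {..<N}" and T: "T \<in> Pow {..<N}"
  shows "((\<lambda>t. ext_map N (H t) S T) has_vector_derivative Der N Z (basis T) S) (at 0)"
proof -
  have fin: "finite T" using T finite_subset by auto
  have sl: "set (sorted_list_of_set T) \<subseteq> {..<N}" using T fin by auto
  have "Der N Z (foldr (phi N idm) (sorted_list_of_set T) vacuum) = Der N Z (basis T)"
    by (rule Der_cong) (use foldr_id[of "sorted_list_of_set T" N] fin sl in auto)
  then show ?thesis unfolding ext_map_foldr using foldr_deriv[OF H0 HD sl S] by simp
qed


definition Xof :: "nat \<Rightarrow> complex mat \<Rightarrow> complex mat" where
  "Xof g Y = four_block_mat (- transpose_mat Y) (0\<^sub>m g g) (0\<^sub>m g g) Y"

definition Zof :: "nat \<Rightarrow> complex mat \<Rightarrow> nat \<Rightarrow> nat \<Rightarrow> complex" where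
  "Zof g Y = (\<lambda>a b. if a div g = b div g then - Y $$ (b mod g, a mod g) else 0)"

lemma Xof_idx:
  assumes Y: "Y \<in> carrier_mat g g" and q: "q < 2*g" and p: "p < 2*g"
  shows "Xof g Y $$ (q,p) = (if q < g \<and> p < g then - Y $$ (p,q) else if g \<le> q \<and> g \<le> p then Y $$ (q-g, p-g) else 0)"
  using Y q p unfolding Xof_def by (subst index_mat_four_block) auto

lemma div_lt: "(a::nat) < 2*n*g \<Longrightarrow> a div g < 2*n"
  by (simp add: less_mult_imp_div_less mult.commute)

lemma mod_lt: "0 < (g::nat) \<Longrightarrow> (a::nat) mod g < g" by simp

lemma eq_divmod: "(a::nat) = b \<longleftrightarrow> a div g = b div g \<and> a mod g = b mod g"
  by (metis div_mult_mod_eq)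

lemma inv_delta:
  assumes E: "E \<in> carrier_mat m m" and Ei: "Ei \<in> carrier_mat m m" and EE: "E * Ei = 1\<^sub>m m"
    and i: "i < m" and j: "j < m"
  shows "(\<Sum>k<m. E $$ (i,k) * Ei $$ (k,j)) = (if i = j then 1 else 0)"
proof -
  have "(E * Ei) $$ (i,j) = (\<Sum>k<m. E $$ (i,k) * Ei $$ (k,j))"
    using E Ei i j by (simp add: scalar_prod_def atLeast0LessThan)
  then show ?thesis using EE i j by simp
qed

context
  fixes n g :: nat and E :: "complex mat"
  assumes g: "0 < g" and E: "E \<in> carrier_mat (2*n) (2*n)"
    and Ei: "inv_mat E \<in> carrier_mat (2*n) (2*n)" and EE: "E * inv_mat E = 1\<^sub>m (2*n)"
begin

lemma cliff_basis:
  assumes b: "b < 2*n*g"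
  shows "cliff n g E (basis_F g b) S T = wedge_op b S T"
proof -
  have "cliff n g E (basis_F g b) S T = (\<Sum>a<2*n*g. if a = b then wedge_op a S T else 0)"
    unfolding cliff_def basis_F_def
  proof (intro sum.cong refl)
    fix a assume "a \<in> {..<2*n*g}"
    have "\<And>i. (if i = b div g \<and> g + a mod g = b mod g then 1 else 0 :: complex) = 0"
      using g mod_lt[OF g, of b] by auto
    then show "(if a div g = b div g \<and> a mod g = b mod g then 1 else 0) * wedge_op a S T +
         (\<Sum>i<2 * n. E $$ (a div g, i) * (if i = b div g \<and> g + a mod g = b mod g then 1 else 0)) * contr_op a S T =
         (if a = b then wedge_op a S T else 0)"
      using eq_divmod[of a b g] by simp
  qed
  also have "\<dots> = wedge_op b S T" using b by simp
  finally show ?thesis .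
qed

lemma cliff_dual:
  assumes b: "b < 2*n*g"
  shows "cliff n g E (dual_F g E b) S T = contr_op b S T"
proof -
  have "cliff n g E (dual_F g E b) S T = (\<Sum>a<2*n*g. if a = b then contr_op a S T else 0)"
    unfolding cliff_def dual_F_def
  proof (intro sum.cong refl)
    fix a assume a: "a \<in> {..<2*n*g}"
    have c1: "a mod g \<noteq> g + b mod g" using mod_lt[OF g, of a] by simp
    have "(\<Sum>i<2 * n. E $$ (a div g, i) * (if g + a mod g = g + b mod g then inv_mat E $$ (i, b div g) else 0))
        = (if a mod g = b mod g then (\<Sum>i<2 * n. E $$ (a div g, i) * inv_mat E $$ (i, b div g)) else 0)"
      by simp
    also have "\<dots> = (if a = b then 1 else 0)"
      using inv_delta[OF E Ei EE div_lt[of a n g] div_lt[OF b]] a eq_divmod[of a b g] by auto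
    finally show "(if a mod g = g + b mod g then inv_mat E $$ (a div g, b div g) else 0) * wedge_op a S T +
         (\<Sum>i<2 * n. E $$ (a div g, i) * (if g + a mod g = g + b mod g then inv_mat E $$ (i, b div g) else 0)) * contr_op a S T =
         (if a = b then contr_op a S T else 0)"
      using c1 by simp
  qed
  also have "\<dots> = contr_op b S T" using b by simp
  finally show ?thesis .
qed

lemma actX_basis:
  assumes Y: "Y \<in> carrier_mat g g" and b: "b < 2*n*g"
  shows "actX g (Xof g Y) (basis_F g b) i q = (if i = b div g then Xof g Y $$ (q, b mod g) else 0)"
proof -
  have bm: "b mod g < 2*g" using mod_lt[OF g, of b] by simp
  have "actX g (Xof g Y) (basis_F g b) i q = (\<Sum>p<2*g. if p = b mod g then (if i = b div g then Xof g Y $$ (q, p) else 0) else 0)"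
    unfolding actX_def basis_F_def by (intro sum.cong refl) auto
  also have "\<dots> = (if i = b div g then Xof g Y $$ (q, b mod g) else 0)"
    using bm by (subst sum.delta) auto
  finally show ?thesis .
qed

lemma actX_dual:
  assumes Y: "Y \<in> carrier_mat g g" and b: "b < 2*n*g"
  shows "actX g (Xof g Y) (dual_F g E b) i q = Xof g Y $$ (q, g + b mod g) * inv_mat E $$ (i, b div g)"
proof -
  have bm: "g + b mod g < 2*g" using mod_lt[OF g, of b] by simp
  have "actX g (Xof g Y) (dual_F g E b) i q = (\<Sum>p<2*g. if p = g + b mod g then Xof g Y $$ (q, p) * inv_mat E $$ (i, b div g) else 0)"
    unfolding actX_def dual_F_def by (intro sum.cong refl) auto
  also have "\<dots> = Xof g Y $$ (q, g + b mod g) * inv_mat E $$ (i, b div g)"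
    using bm by (subst sum.delta) auto
  finally show ?thesis .
qed

lemma cliff_actX_basis:
  assumes Y: "Y \<in> carrier_mat g g" and b: "b < 2*n*g"
  shows "cliff n g E (actX g (Xof g Y) (basis_F g b)) S T = (\<Sum>a<2*n*g. Zof g Y a b * wedge_op a S T)"
  unfolding cliff_def
proof (intro sum.cong refl)
  fix a assume a: "a \<in> {..<2*n*g}"
  have am: "a mod g < g" "b mod g < g" "a mod g < 2*g" "b mod g < 2*g" "g + a mod g < 2*g" "g + b mod g < 2*g"
  proof -
    have "a mod g < g" "b mod g < g" using mod_lt[OF g, of a] mod_lt[OF g, of b] by auto
    then show "a mod g < g" "b mod g < g" "a mod g < 2*g" "b mod g < 2*g" "g + a mod g < 2*g" "g + b mod g < 2*g"
      by linarith+
  qed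
  have "\<And>i. actX g (Xof g Y) (basis_F g b) i (g + a mod g) = 0"
    using am by (simp add: actX_basis[OF Y b] Xof_idx[OF Y am(5) am(4)])
  moreover have "actX g (Xof g Y) (basis_F g b) (a div g) (a mod g) = Zof g Y a b"
    using am by (simp add: actX_basis[OF Y b] Xof_idx[OF Y am(3) am(4)] Zof_def)
  ultimately show "actX g (Xof g Y) (basis_F g b) (a div g) (a mod g) * wedge_op a S T +
         (\<Sum>i<2 * n. E $$ (a div g, i) * actX g (Xof g Y) (basis_F g b) i (g + a mod g)) * contr_op a S T =
         Zof g Y a b * wedge_op a S T" by simp
qed

lemma cliff_actX_dual:
  assumes Y: "Y \<in> carrier_mat g g" and b: "b < 2*n*g"
  shows "cliff n g E (actX g (Xof g Y) (dual_F g E b)) S T = (\<Sum>a<2*n*g. - Zof g Y b a * contr_op a S T)"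
  unfolding cliff_def
proof (intro sum.cong refl)
  fix a assume a: "a \<in> {..<2*n*g}"
  have am: "a mod g < g" "b mod g < g" "a mod g < 2*g" "b mod g < 2*g" "g + a mod g < 2*g" "g + b mod g < 2*g"
  proof -
    have "a mod g < g" "b mod g < g" using mod_lt[OF g, of a] mod_lt[OF g, of b] by auto
    then show "a mod g < g" "b mod g < g" "a mod g < 2*g" "b mod g < 2*g" "g + a mod g < 2*g" "g + b mod g < 2*g"
      by linarith+
  qed
  have 1: "actX g (Xof g Y) (dual_F g E b) (a div g) (a mod g) = 0"
  proof -
    have nl: "\<not> (g \<le> a mod g)" using am(1) by linarith
    show ?thesis using nl by (simp add: actX_dual[OF Y b] Xof_idx[OF Y am(3) am(6)])
  qed
  have "(\<Sum>i<2 * n. E $$ (a div g, i) * actX g (Xof g Y) (dual_F g E b) i (g + a mod g))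
      = Y $$ (a mod g, b mod g) * (\<Sum>i<2 * n. E $$ (a div g, i) * inv_mat E $$ (i, b div g))"
    using am by (simp add: actX_dual[OF Y b] Xof_idx[OF Y am(5) am(6)] sum_distrib_left algebra_simps)
  also have "\<dots> = - Zof g Y b a"
    using inv_delta[OF E Ei EE div_lt[of a n g] div_lt[OF b]] a by (auto simp: Zof_def)
  finally show "actX g (Xof g Y) (dual_F g E b) (a div g) (a mod g) * wedge_op a S T +
         (\<Sum>i<2 * n. E $$ (a div g, i) * actX g (Xof g Y) (dual_F g E b) i (g + a mod g)) * contr_op a S T =
         - Zof g Y b a * contr_op a S T" using 1 by simp
qed

end


definition tr :: "nat \<Rightarrow> complex mat \<Rightarrow> complex" where
  "tr g Y = (\<Sum>k<g. Y $$ (k,k))"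

lemma sum_mod_rep:
  fixes f :: "nat \<Rightarrow> complex"
  shows "(\<Sum>a<m*g. f (a mod g)) = of_nat m * (\<Sum>k<g. f k)"
proof (induction m)
  case 0 then show ?case by simp
next
  case (Suc m)
  have "(\<Sum>a<Suc m*g. f (a mod g)) = (\<Sum>a\<in>{0..<m*g}. f (a mod g)) + (\<Sum>a\<in>{m*g..<Suc m*g}. f (a mod g))"
    by (simp add: atLeast0LessThan[symmetric] sum.atLeastLessThan_concat)
  also have "(\<Sum>a\<in>{m*g..<Suc m*g}. f (a mod g)) = (\<Sum>a\<in>{0..<g}. f ((a + m*g) mod g))"
    using sum.shift_bounds_nat_ivl[of "\<lambda>a. f (a mod g)" 0 "m*g" g] by (simp add: add.commute)
  also have "\<dots> = (\<Sum>a<g. f a)" by (simp add: atLeast0LessThan)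
  finally show ?case using Suc by (simp add: atLeast0LessThan algebra_simps)
qed

lemma colC: "T \<in> Pow {..<N} \<Longrightarrow> C N b (basis T) U = contr_op b U T"
  unfolding op_app_def basis_def by (simp add: if_distrib cong: if_cong)

lemma colW: "T \<in> Pow {..<N} \<Longrightarrow> W N b (basis T) U = wedge_op b U T"
  unfolding op_app_def basis_def by (simp add: if_distrib cong: if_cong)

context
  fixes n g :: nat and E :: "complex mat"
  assumes g: "0 < g" and E: "E \<in> carrier_mat (2*n) (2*n)"
    and Ei: "inv_mat E \<in> carrier_mat (2*n) (2*n)" and EE: "E * inv_mat E = 1\<^sub>m (2*n)"
begin

lemma spin_Xof:
  assumes Y: "Y \<in> carrier_mat g g" and S: "S \<in> Pow {..<2*n*g}" and T: "T \<in> Pow {..<2*n*g}"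
  shows "spin n g E (Xof g Y) S T = Der (2*n*g) (Zof g Y) (basis T) S + of_nat n * tr g Y * (if S = T then 1 else 0)"
proof -
  let ?N = "2*n*g"
  let ?Z = "Zof g Y"
  let ?x = "basis T"
  note cb = cliff_basis[OF g E Ei EE] and cd = cliff_dual[OF g E Ei EE]
   and cab = cliff_actX_basis[OF g E Ei EE Y] and cad = cliff_actX_dual[OF g E Ei EE Y]
  have t1: "\<And>b. b < ?N \<Longrightarrow> op_comp ?N (cliff n g E (actX g (Xof g Y) (basis_F g b))) (cliff n g E (dual_F g E b)) S T
      = (\<Sum>a<?N. ?Z a b * W ?N a (C ?N b ?x) S)"
  proof -
    fix b assume b: "b < ?N"
    have "op_comp ?N (cliff n g E (actX g (Xof g Y) (basis_F g b))) (cliff n g E (dual_F g E b)) S T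
        = (\<Sum>U\<in>Pow {..<?N}. (\<Sum>a<?N. ?Z a b * wedge_op a S U) * contr_op b U T)"
      unfolding op_comp_def using cab[OF b] cd[OF b] by simp
    also have "\<dots> = (\<Sum>a<?N. ?Z a b * (\<Sum>U\<in>Pow {..<?N}. wedge_op a S U * contr_op b U T))"
      by (simp add: sum_distrib_right sum_distrib_left mult.assoc) (rule sum.swap)
    also have "\<dots> = (\<Sum>a<?N. ?Z a b * W ?N a (C ?N b ?x) S)"
      unfolding op_app_def[of ?N "wedge_op _"] colC[OF T] ..
    finally show "op_comp ?N (cliff n g E (actX g (Xof g Y) (basis_F g b))) (cliff n g E (dual_F g E b)) S T
      = (\<Sum>a<?N. ?Z a b * W ?N a (C ?N b ?x) S)" .
  qed
  have t2: "\<And>b. b < ?N \<Longrightarrow> op_comp ?N (cliff n g E (actX g (Xof g Y) (dual_F g E b))) (cliff n g E (basis_F g b)) S T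
      = (\<Sum>a<?N. - ?Z b a * ((if a = b then ?x S else 0) - W ?N b (C ?N a ?x) S))"
  proof -
    fix b assume b: "b < ?N"
    have "op_comp ?N (cliff n g E (actX g (Xof g Y) (dual_F g E b))) (cliff n g E (basis_F g b)) S T
        = (\<Sum>U\<in>Pow {..<?N}. (\<Sum>a<?N. - ?Z b a * contr_op a S U) * wedge_op b U T)"
      unfolding op_comp_def using cad[OF b] cb[OF b] by simp
    also have "\<dots> = (\<Sum>a<?N. - ?Z b a * (\<Sum>U\<in>Pow {..<?N}. contr_op a S U * wedge_op b U T))"
      by (simp only: sum_distrib_right sum_distrib_left mult.assoc) (rule sum.swap)
    also have "\<dots> = (\<Sum>a<?N. - ?Z b a * C ?N a (W ?N b ?x) S)"
      unfolding op_app_def[of ?N "contr_op _"] colW[OF T] ..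
    also have "\<dots> = (\<Sum>a<?N. - ?Z b a * ((if a = b then ?x S else 0) - W ?N b (C ?N a ?x) S))"
    proof (intro sum.cong refl)
      fix a assume "a \<in> {..<?N}"
      then have "C ?N a (W ?N b ?x) S + W ?N b (C ?N a ?x) S = (if a = b then ?x S else 0)"
        using clifford[OF S _ b] by simp
      then show "- ?Z b a * C ?N a (W ?N b ?x) S = - ?Z b a * ((if a = b then ?x S else 0) - W ?N b (C ?N a ?x) S)"
        by (simp add: eq_diff_eq)
    qed
    finally show "op_comp ?N (cliff n g E (actX g (Xof g Y) (dual_F g E b))) (cliff n g E (basis_F g b)) S T
      = (\<Sum>a<?N. - ?Z b a * ((if a = b then ?x S else 0) - W ?N b (C ?N a ?x) S))" .
  qed
  have D1: "(\<Sum>b<?N. \<Sum>a<?N. ?Z a b * W ?N a (C ?N b ?x) S) = Der ?N ?Z ?x S"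
    unfolding Der_def by (rule sum.swap)
  have D2: "(\<Sum>b<?N. \<Sum>a<?N. - ?Z b a * ((if a = b then ?x S else 0) - W ?N b (C ?N a ?x) S))
      = - (\<Sum>b<?N. ?Z b b) * ?x S + Der ?N ?Z ?x S"
  proof -
    have "(\<Sum>b<?N. \<Sum>a<?N. - ?Z b a * ((if a = b then ?x S else 0) - W ?N b (C ?N a ?x) S))
        = (\<Sum>b<?N. \<Sum>a<?N. (if a = b then - ?Z b a * ?x S else 0) + ?Z b a * W ?N b (C ?N a ?x) S)"
      by (intro sum.cong refl) (simp add: algebra_simps)
    also have "\<dots> = (\<Sum>b<?N. \<Sum>a<?N. (if a = b then - ?Z b a * ?x S else 0)) + (\<Sum>b<?N. \<Sum>a<?N. ?Z b a * W ?N b (C ?N a ?x) S)"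
      by (simp only: sum.distrib)
    also have "(\<Sum>b<?N. \<Sum>a<?N. (if a = b then - ?Z b a * ?x S else 0)) = - (\<Sum>b<?N. ?Z b b) * ?x S"
      by (simp add: sum_negf sum_distrib_right)
    also have "(\<Sum>b<?N. \<Sum>a<?N. ?Z b a * W ?N b (C ?N a ?x) S) = Der ?N ?Z ?x S"
      unfolding Der_def ..
    finally show ?thesis .
  qed
  have trZ: "- (\<Sum>b<?N. ?Z b b) = 2 * of_nat n * tr g Y"
  proof -
    have "- (\<Sum>b<?N. ?Z b b) = (\<Sum>b<(2*n)*g. Y $$ (b mod g, b mod g))"
      by (simp add: Zof_def sum_negf)
    also have "\<dots> = of_nat (2*n) * tr g Y" unfolding tr_def by (rule sum_mod_rep)
    finally show ?thesis by simp
  qed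
  have "spin n g E (Xof g Y) S T = (1/2) * ((\<Sum>b<?N. \<Sum>a<?N. ?Z a b * W ?N a (C ?N b ?x) S)
      + (\<Sum>b<?N. \<Sum>a<?N. - ?Z b a * ((if a = b then ?x S else 0) - W ?N b (C ?N a ?x) S)))"
    unfolding spin_def using t1 t2 by (simp add: sum.distrib)
  also have "\<dots> = Der ?N ?Z ?x S + of_nat n * tr g Y * ?x S"
    unfolding D1 D2 trZ by (simp add: algebra_simps)
  finally show ?thesis by (simp add: basis_def)
qed

end


lemma inv_mat_unique:
  assumes A: "A \<in> carrier_mat k k" and B: "B \<in> carrier_mat k k" and AB: "A * B = 1\<^sub>m k"
  shows "inv_mat A = B"
proof -
  have BA: "B * A = 1\<^sub>m k" by (rule mat_mult_left_right_inverse[OF A B AB])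
  have dA: "dim_row A = k" using A by simp
  let ?P = "\<lambda>B. B \<in> carrier_mat k k \<and> A * B = 1\<^sub>m k \<and> B * A = 1\<^sub>m k"
  have "?P (inv_mat A)" unfolding inv_mat_def dA by (rule someI[of ?P B]) (use B AB BA in auto)
  then have C: "inv_mat A \<in> carrier_mat k k" "inv_mat A * A = 1\<^sub>m k" by auto
  have "inv_mat A = inv_mat A * (A * B)" using C by (simp add: AB)
  also have "\<dots> = (inv_mat A * A) * B" by (rule assoc_mult_mat[symmetric, OF C(1) A B])
  also have "\<dots> = B" using C B by simp
  finally show ?thesis .
qed

lemma inv_mat_exists:
  assumes A: "A \<in> carrier_mat k k" and d: "det A \<noteq> 0"
  shows "inv_mat A \<in> carrier_mat k k" "A * inv_mat A = 1\<^sub>m k" "inv_mat A * A = 1\<^sub>m k"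
proof -
  have "A \<in> Units (ring_mat TYPE(complex) k ())" by (rule det_non_zero_imp_unit[OF A d])
  then obtain B where B: "B \<in> carrier_mat k k" "A * B = 1\<^sub>m k"
    unfolding Units_def ring_mat_def by auto
  have "inv_mat A = B" by (rule inv_mat_unique[OF A B])
  then show "inv_mat A \<in> carrier_mat k k" "A * inv_mat A = 1\<^sub>m k" "inv_mat A * A = 1\<^sub>m k"
    using B mat_mult_left_right_inverse[OF A B(1) B(2)] by auto
qed

definition Minv :: "complex mat \<Rightarrow> complex mat" where
  "Minv M = inv_mat (transpose_mat M)"

lemma Minv_props:
  assumes M: "M \<in> carrier_mat g g" and d: "det M \<noteq> 0"
  shows "Minv M \<in> carrier_mat g g" "transpose_mat M * Minv M = 1\<^sub>m g" "Minv M * transpose_mat M = 1\<^sub>m g"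
proof -
  have T: "transpose_mat M \<in> carrier_mat g g" using M by simp
  have "det (transpose_mat M) \<noteq> 0" using det_transpose[OF M] d by simp
  from inv_mat_exists[OF T this] show "Minv M \<in> carrier_mat g g" "transpose_mat M * Minv M = 1\<^sub>m g" "Minv M * transpose_mat M = 1\<^sub>m g"
    unfolding Minv_def by auto
qed

lemma Minv_mult:
  assumes A: "A \<in> carrier_mat g g" "det A \<noteq> 0" and B: "B \<in> carrier_mat g g" "det B \<noteq> 0"
  shows "Minv (A * B) = Minv A * Minv B"
proof -
  note a = Minv_props[OF A] and b = Minv_props[OF B]
  have tA: "transpose_mat A \<in> carrier_mat g g" and tB: "transpose_mat B \<in> carrier_mat g g" using A B by auto
  have "transpose_mat (A * B) * (Minv A * Minv B) = (transpose_mat B * transpose_mat A) * (Minv A * Minv B)"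
    by (simp add: transpose_mult[OF A(1) B(1)])
  also have "\<dots> = transpose_mat B * (transpose_mat A * (Minv A * Minv B))"
    by (rule assoc_mult_mat[OF tB tA mult_carrier_mat[OF a(1) b(1)]])
  also have "transpose_mat A * (Minv A * Minv B) = (transpose_mat A * Minv A) * Minv B"
    by (rule assoc_mult_mat[symmetric, OF tA a(1) b(1)])
  also have "\<dots> = Minv B" using a b by simp
  also have "transpose_mat B * Minv B = 1\<^sub>m g" by (rule b(2))
  finally have "transpose_mat (A * B) * (Minv A * Minv B) = 1\<^sub>m g" .
  moreover have "transpose_mat (A * B) \<in> carrier_mat g g" using A B by simp
  moreover have "Minv A * Minv B \<in> carrier_mat g g" using a b by simp
  ultimately show ?thesis using inv_mat_unique[of "transpose_mat (A * B)" g "Minv A * Minv B"]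
    unfolding Minv_def by simp
qed

lemma Minv_one: "Minv (1\<^sub>m g) = 1\<^sub>m g"
  unfolding Minv_def by (rule inv_mat_unique[of _ g]) auto

lemma gl_emb_Minv: "gl_emb g M = four_block_mat (Minv M) (0\<^sub>m g g) (0\<^sub>m g g) M"
  unfolding gl_emb_def Minv_def ..

lemma gl_emb_carrier: "M \<in> carrier_mat g g \<Longrightarrow> det M \<noteq> 0 \<Longrightarrow> gl_emb g M \<in> carrier_mat (2*g) (2*g)"
  unfolding gl_emb_Minv using Minv_props(1) by (auto intro!: four_block_carrier_mat[of _ g g _ g g, simplified] simp: mult_2)

lemma gl_emb_mult:
  assumes A: "A \<in> carrier_mat g g" "det A \<noteq> 0" and B: "B \<in> carrier_mat g g" "det B \<noteq> 0"
  shows "gl_emb g (A * B) = gl_emb g A * gl_emb g B"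
proof -
  note a = Minv_props[OF A] and b = Minv_props[OF B]
  show ?thesis unfolding gl_emb_Minv Minv_mult[OF A B]
    by (subst mult_four_block_mat[OF a(1) zero_carrier_mat zero_carrier_mat A(1) b(1) zero_carrier_mat zero_carrier_mat B(1)])
       (use A B a b in auto)
qed

lemma gl_emb_one: "gl_emb g (1\<^sub>m g) = 1\<^sub>m (2*g)"
  unfolding gl_emb_Minv Minv_one by (rule eq_matI) auto

lemma gl_emb_sp:
  assumes M: "M \<in> carrier_mat g g" "det M \<noteq> 0"
  shows "gl_emb g M \<in> sp_group g"
proof -
  note m = Minv_props[OF M]
  have MiT: "transpose_mat (Minv M) * M = 1\<^sub>m g"
  proof -
    have tM: "transpose_mat M \<in> carrier_mat g g" using M by simp
    have tMi: "transpose_mat (Minv M) \<in> carrier_mat g g" using m by simp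
    have "transpose_mat (Minv M * transpose_mat M) = M * transpose_mat (Minv M)"
      using transpose_mult[OF m(1) tM] by simp
    then have "M * transpose_mat (Minv M) = 1\<^sub>m g" using m(3) by simp
    then show ?thesis by (rule mat_mult_left_right_inverse[OF M(1) tMi])
  qed
  have tM: "transpose_mat M \<in> carrier_mat g g" using M by simp
  have tMi: "transpose_mat (Minv M) \<in> carrier_mat g g" using m by simp
  have ntM: "- transpose_mat M \<in> carrier_mat g g" using M by simp
  have s1: "transpose_mat (gl_emb g M) = four_block_mat (transpose_mat (Minv M)) (0\<^sub>m g g) (0\<^sub>m g g) (transpose_mat M)"
    unfolding gl_emb_Minv by (subst transpose_four_block_mat[OF m(1) zero_carrier_mat zero_carrier_mat M(1)]) simp
  have z: "- 0\<^sub>m g g = (0\<^sub>m g g :: complex mat)" by (rule eq_matI) auto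
  have s2: "transpose_mat (gl_emb g M) * Omega g = four_block_mat (0\<^sub>m g g) (transpose_mat (Minv M)) (- transpose_mat M) (0\<^sub>m g g)"
    unfolding s1 Omega_def
    by (subst mult_four_block_mat[OF tMi zero_carrier_mat zero_carrier_mat tM zero_carrier_mat one_carrier_mat uminus_carrier_mat[OF one_carrier_mat] zero_carrier_mat])
       (use tM tMi z in simp)
  have s3: "transpose_mat (gl_emb g M) * Omega g * gl_emb g M = four_block_mat (0\<^sub>m g g) (1\<^sub>m g) (- 1\<^sub>m g) (0\<^sub>m g g)"
    unfolding s2 unfolding gl_emb_Minv
    by (subst mult_four_block_mat[OF zero_carrier_mat tMi ntM zero_carrier_mat m(1) zero_carrier_mat zero_carrier_mat M(1)])
       (use tM tMi m M MiT in simp)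
  have "transpose_mat (gl_emb g M) * Omega g * gl_emb g M = Omega g"
    using s3 unfolding Omega_def .
  then show ?thesis unfolding sp_group_def using gl_emb_carrier[OF M] by auto
qed


lemma foldr_cong_G:
  assumes "\<forall>a<N. \<forall>b<N. G a b = G' a b" "set xs \<subseteq> {..<N}"
  shows "foldr (phi N G) xs y = foldr (phi N G') xs y"
  using assms(2)
proof (induction xs)
  case Nil then show ?case by simp
next
  case (Cons b xs)
  have "phi N G b = phi N G' b"
    unfolding phi_def wv_def wedge_vec_def using assms(1) Cons.prems by auto
  then show ?case using Cons by simp
qed

lemma ext_map_cong:
  assumes "\<forall>a<N. \<forall>b<N. G a b = G' a b" "T \<in> Pow {..<N}"
  shows "ext_map N G S T = ext_map N G' S T"
proof -
  have "finite T" using assms(2) finite_subset by auto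
  then have "set (sorted_list_of_set T) \<subseteq> {..<N}" using assms(2) by auto
  then show ?thesis unfolding ext_map_foldr using foldr_cong_G[OF assms(1)] by simp
qed

lemma sum_divmod:
  fixes F :: "nat \<Rightarrow> complex"
  shows "(\<Sum>c<m*g. F c) = (\<Sum>d<m. \<Sum>k<g. F (d*g + k))"
proof (induction m)
  case 0 then show ?case by simp
next
  case (Suc m)
  have "(\<Sum>c<Suc m*g. F c) = (\<Sum>c\<in>{0..<m*g}. F c) + (\<Sum>c\<in>{m*g..<Suc m*g}. F c)"
    by (simp add: atLeast0LessThan[symmetric] sum.atLeastLessThan_concat)
  also have "(\<Sum>c\<in>{m*g..<Suc m*g}. F c) = (\<Sum>k\<in>{0..<g}. F (k + m*g))"
    using sum.shift_bounds_nat_ivl[of F 0 "m*g" g] by (simp add: add.commute)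
  finally show ?case using Suc by (simp add: atLeast0LessThan add.commute)
qed

lemma GF_Minv: "GF g M a b = (if a div g = b div g then Minv M $$ (a mod g, b mod g) else 0)"
  unfolding GF_def Minv_def ..

lemma GF_mult:
  assumes g: "0 < g" and A: "A \<in> carrier_mat g g" "det A \<noteq> 0" and B: "B \<in> carrier_mat g g" "det B \<noteq> 0"
    and a: "a < 2*n*g" and b: "b < 2*n*g"
  shows "GF g (A * B) a b = mprod (2*n*g) (GF g A) (GF g B) a b"
proof -
  note ma = Minv_props[OF A] and mb = Minv_props[OF B]
  have am: "a mod g < g" "b mod g < g" using g by auto
  have ad: "a div g < 2*n" "b div g < 2*n" using div_lt a b by auto
  have prod: "Minv (A * B) $$ (a mod g, b mod g) = (\<Sum>k<g. Minv A $$ (a mod g, k) * Minv B $$ (k, b mod g))"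
    unfolding Minv_mult[OF A B] using ma(1) mb(1) am by (simp add: scalar_prod_def atLeast0LessThan)
  have "mprod (2*n*g) (GF g A) (GF g B) a b = (\<Sum>d<2*n. \<Sum>k<g. GF g A a (d*g+k) * GF g B (d*g+k) b)"
    unfolding mprod_def by (rule sum_divmod)
  also have "\<dots> = (\<Sum>d<2*n. if d = a div g then (if a div g = b div g then (\<Sum>k<g. Minv A $$ (a mod g, k) * Minv B $$ (k, b mod g)) else 0) else 0)"
  proof (intro sum.cong refl)
    fix d assume "d \<in> {..<2*n}"
    have e: "\<And>k. k < g \<Longrightarrow> (d*g+k) div g = d \<and> (d*g+k) mod g = k" using g by simp
    show "(\<Sum>k<g. GF g A a (d*g+k) * GF g B (d*g+k) b) =
      (if d = a div g then (if a div g = b div g then (\<Sum>k<g. Minv A $$ (a mod g, k) * Minv B $$ (k, b mod g)) else 0) else 0)"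
      by (auto simp: GF_Minv e intro!: sum.cong sum.neutral)
  qed
  also have "\<dots> = (if a div g = b div g then (\<Sum>k<g. Minv A $$ (a mod g, k) * Minv B $$ (k, b mod g)) else 0)"
    using ad by simp
  also have "\<dots> = GF g (A * B) a b" unfolding GF_Minv prod ..
  finally show ?thesis ..
qed

definition Qm :: "nat \<Rightarrow> nat \<Rightarrow> complex mat \<Rightarrow> nat set \<Rightarrow> nat set \<Rightarrow> complex" where
  "Qm n g M = (\<lambda>S T. det M ^ n * rho0 n g M S T)"

lemma op_comp_scale: "op_comp N (\<lambda>S T. c * P S T) (\<lambda>S T. d * Q S T) S T = c * d * op_comp N P Q S T"
  unfolding op_comp_def by (simp add: sum_distrib_left algebra_simps)

lemma Qm_hom:
  assumes g: "0 < g" and A: "A \<in> carrier_mat g g" "det A \<noteq> 0" and B: "B \<in> carrier_mat g g" "det B \<noteq> 0"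
    and S: "S \<in> Pow {..<2*n*g}" and T: "T \<in> Pow {..<2*n*g}"
  shows "Qm n g (A * B) S T = op_comp (2*n*g) (Qm n g A) (Qm n g B) S T"
proof -
  have "rho0 n g (A * B) S T = ext_map (2*n*g) (mprod (2*n*g) (GF g A) (GF g B)) S T"
    unfolding rho0_def by (rule ext_map_cong[OF _ T]) (use GF_mult[OF g A B] in auto)
  also have "\<dots> = op_comp (2*n*g) (rho0 n g A) (rho0 n g B) S T"
    unfolding rho0_def by (rule ext_map_hom[symmetric, OF S])
  finally have r: "rho0 n g (A * B) S T = op_comp (2*n*g) (rho0 n g A) (rho0 n g B) S T" .
  show ?thesis unfolding Qm_def op_comp_scale r det_mult[OF A(1) B(1)] by (simp add: power_mult_distrib)
qed

lemma GF_one: "0 < g \<Longrightarrow> a < 2*n*g \<Longrightarrow> b < 2*n*g \<Longrightarrow> GF g (1\<^sub>m g) a b = idm a b"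
  unfolding GF_Minv Minv_one idm_def using eq_divmod[of a b g] by auto

lemma Qm_one:
  assumes g: "0 < g" and S: "S \<in> Pow {..<2*n*g}" and T: "T \<in> Pow {..<2*n*g}"
  shows "Qm n g (1\<^sub>m g) S T = (if S = T then 1 else 0)"
proof -
  have "rho0 n g (1\<^sub>m g) S T = ext_map (2*n*g) idm S T"
    unfolding rho0_def by (rule ext_map_cong[OF _ T]) (use GF_one[OF g] in auto)
  then show ?thesis unfolding Qm_def using ext_map_id[OF S T] by simp
qed

lemma op_comp_assoc: "op_comp N (op_comp N P Q) R S T = op_comp N P (op_comp N Q R) S T"
proof -
  have "op_comp N (op_comp N P Q) R S T = (\<Sum>U\<in>Pow {..<N}. \<Sum>V\<in>Pow {..<N}. P S V * Q V U * R U T)"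
    unfolding op_comp_def by (simp add: sum_distrib_right)
  also have "\<dots> = (\<Sum>V\<in>Pow {..<N}. \<Sum>U\<in>Pow {..<N}. P S V * Q V U * R U T)" by (rule sum.swap)
  also have "\<dots> = op_comp N P (op_comp N Q R) S T"
    unfolding op_comp_def by (simp add: sum_distrib_left mult.assoc)
  finally show ?thesis .
qed

lemma op_comp_id_left: assumes "S \<in> Pow {..<N}" shows "op_comp N (\<lambda>S T. if S = T then 1 else 0) P S T = P S T"
proof -
  have "op_comp N (\<lambda>S T. if S = T then 1 else 0) P S T = (\<Sum>U\<in>Pow {..<N}. if U = S then P S T else 0)"
    unfolding op_comp_def by (intro sum.cong) auto
  then show ?thesis using assms by simp
qed

lemma op_comp_id_right: assumes "T \<in> Pow {..<N}" shows "op_comp N P (\<lambda>S T. if S = T then 1 else 0) S T = P S T"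
proof -
  have "op_comp N P (\<lambda>S T. if S = T then 1 else 0) S T = (\<Sum>U\<in>Pow {..<N}. if U = T then P S T else 0)"
    unfolding op_comp_def by (intro sum.cong) auto
  then show ?thesis using assms by simp
qed

lemma op_comp_cong:
  assumes "\<And>U. U \<in> Pow {..<N} \<Longrightarrow> P S U = P' S U" "\<And>U. U \<in> Pow {..<N} \<Longrightarrow> Q U T = Q' U T"
  shows "op_comp N P Q S T = op_comp N P' Q' S T"
  unfolding op_comp_def using assms by (intro sum.cong) auto


lemma vd_shift:
  fixes F :: "real \<Rightarrow> complex"
  assumes "((\<lambda>s. F (t + s)) has_vector_derivative D) (at 0)"
  shows "(F has_vector_derivative D) (at t)"
proof -
  have d1: "((\<lambda>u. u - t) has_vector_derivative 1) (at t)"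
    by (auto intro!: derivative_eq_intros)
  have "((\<lambda>s. F (t + s)) has_vector_derivative D) (at ((\<lambda>u. u - t) t))" using assms by simp
  from vector_diff_chain_at[OF d1 this] show ?thesis by (simp add: o_def)
qed

lemma vd_neg:
  fixes F :: "real \<Rightarrow> complex"
  assumes "(F has_vector_derivative D) (at (-t))"
  shows "((\<lambda>t. F (-t)) has_vector_derivative -D) (at t)"
proof -
  have d1: "((\<lambda>u. - u) has_vector_derivative -1) (at t)"
    by (auto intro!: derivative_eq_intros)
  have "(F has_vector_derivative D) (at ((\<lambda>u. - u) t))" using assms by simp
  from vector_diff_chain_at[OF d1 this] show ?thesis by (simp add: o_def)
qed

lemma vd_pow:
  fixes f :: "real \<Rightarrow> complex"
  assumes "(f has_vector_derivative f') (at 0)" "f 0 = 1"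
  shows "((\<lambda>t. f t ^ k) has_vector_derivative of_nat k * f') (at 0)"
proof (induction k)
  case 0 then show ?case by (simp add: has_vector_derivative_const)
next
  case (Suc k)
  have "((\<lambda>t. f t * f t ^ k) has_vector_derivative f 0 * (of_nat k * f') + f' * f 0 ^ k) (at 0)"
    by (rule has_vector_derivative_mult[OF assms(1) Suc])
  then show ?case using assms(2) by (simp add: algebra_simps)
qed

lemma op_comp_deriv_right:
  assumes "\<And>U. U \<in> Pow {..<N} \<Longrightarrow> ((\<lambda>t. Q t U T) has_vector_derivative Q' U T) F"
  shows "((\<lambda>t. op_comp N P (Q t) S T) has_vector_derivative op_comp N P Q' S T) F"
  unfolding op_comp_def by (intro has_vector_derivative_sum has_vector_derivative_mult_right assms) auto

lemma op_comp_deriv_left: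
  assumes "\<And>U. U \<in> Pow {..<N} \<Longrightarrow> ((\<lambda>t. P t S U) has_vector_derivative P' S U) F"
  shows "((\<lambda>t. op_comp N (P t) Q S T) has_vector_derivative op_comp N P' Q S T) F"
  unfolding op_comp_def by (intro has_vector_derivative_sum has_vector_derivative_mult_left assms) auto

locale setting =
  fixes n g :: nat and E :: "complex mat"
    and \<rho> :: "complex mat \<Rightarrow> nat set \<Rightarrow> nat set \<Rightarrow> complex"
  assumes g_pos: "0 < g"
    and E_dim: "E \<in> carrier_mat (2*n) (2*n)"
    and E_nondeg: "det E \<noteq> 0"
    and rho_one: "\<forall>S\<in>Pow {..<2*n*g}. \<forall>T\<in>Pow {..<2*n*g}.
                    \<rho> (1\<^sub>m (2*g)) S T = (if S = T then 1 else 0)"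
    and rho_hom: "\<forall>A\<in>sp_group g. \<forall>B\<in>sp_group g. \<forall>S\<in>Pow {..<2*n*g}. \<forall>T\<in>Pow {..<2*n*g}.
                    \<rho> (A * B) S T = op_comp (2*n*g) (\<rho> A) (\<rho> B) S T"
    and rho_diff: "\<And>X (\<gamma> :: real \<Rightarrow> complex mat).
        X \<in> sp_alg g \<Longrightarrow> (\<forall>t. \<gamma> t \<in> sp_group g) \<Longrightarrow> \<gamma> 0 = 1\<^sub>m (2*g) \<Longrightarrow>
        (\<forall>i<2*g. \<forall>j<2*g. ((\<lambda>t. \<gamma> t $$ (i, j)) has_vector_derivative X $$ (i, j)) (at 0)) \<Longrightarrow>
        \<forall>S\<in>Pow {..<2*n*g}. \<forall>T\<in>Pow {..<2*n*g}.
          ((\<lambda>t. \<rho> (\<gamma> t) S T) has_vector_derivative spin n g E X S T) (at 0)"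
begin

abbreviation "NN \<equiv> 2*n*g"

definition Rm :: "complex mat \<Rightarrow> nat set \<Rightarrow> nat set \<Rightarrow> complex" where
  "Rm M = \<rho> (gl_emb g M)"

lemma Einv: "inv_mat E \<in> carrier_mat (2*n) (2*n)" "E * inv_mat E = 1\<^sub>m (2*n)"
  using inv_mat_exists[OF E_dim E_nondeg] by auto

lemma Rm_hom:
  assumes "A \<in> carrier_mat g g" "det A \<noteq> 0" "B \<in> carrier_mat g g" "det B \<noteq> 0"
    and "S \<in> Pow {..<NN}" "T \<in> Pow {..<NN}"
  shows "Rm (A * B) S T = op_comp NN (Rm A) (Rm B) S T"
  unfolding Rm_def gl_emb_mult[OF assms(1-4)] using rho_hom gl_emb_sp assms by blast

lemma Rm_one: "S \<in> Pow {..<NN} \<Longrightarrow> T \<in> Pow {..<NN} \<Longrightarrow> Rm (1\<^sub>m g) S T = (if S = T then 1 else 0)"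
  unfolding Rm_def gl_emb_one using rho_one by blast

lemma Xof_sp_alg:
  assumes Y: "Y \<in> carrier_mat g g"
  shows "Xof g Y \<in> sp_alg g"
proof -
  have tY: "transpose_mat Y \<in> carrier_mat g g" using Y by simp
  have ntY: "- transpose_mat Y \<in> carrier_mat g g" using Y by simp
  have nY: "- Y \<in> carrier_mat g g" using Y by simp
  have z: "- 0\<^sub>m g g = (0\<^sub>m g g :: complex mat)" by (rule eq_matI) auto
  have Xc: "Xof g Y \<in> carrier_mat (2*g) (2*g)"
    unfolding Xof_def using Y by (auto simp: mult_2)
  have t: "transpose_mat (Xof g Y) = four_block_mat (- Y) (0\<^sub>m g g) (0\<^sub>m g g) (transpose_mat Y)"
    unfolding Xof_def by (subst transpose_four_block_mat[OF ntY zero_carrier_mat zero_carrier_mat Y]) (simp add: transpose_uminus)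
  have p1: "transpose_mat (Xof g Y) * Omega g = four_block_mat (0\<^sub>m g g) (- Y) (- transpose_mat Y) (0\<^sub>m g g)"
    unfolding t Omega_def
    by (subst mult_four_block_mat[OF nY zero_carrier_mat zero_carrier_mat tY zero_carrier_mat one_carrier_mat uminus_carrier_mat[OF one_carrier_mat] zero_carrier_mat])
       (use Y tY nY z in simp)
  have p2: "Omega g * Xof g Y = four_block_mat (0\<^sub>m g g) Y (transpose_mat Y) (0\<^sub>m g g)"
    unfolding Xof_def Omega_def
    by (subst mult_four_block_mat[OF zero_carrier_mat one_carrier_mat uminus_carrier_mat[OF one_carrier_mat] zero_carrier_mat ntY zero_carrier_mat zero_carrier_mat Y])
       (use Y tY nY z in simp)
  have "transpose_mat (Xof g Y) * Omega g + Omega g * Xof g Y = 0\<^sub>m (2*g) (2*g)"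
    unfolding p1 p2
    by (subst add_four_block_mat[OF zero_carrier_mat nY uminus_carrier_mat[OF tY] zero_carrier_mat zero_carrier_mat Y tY zero_carrier_mat])
       (rule eq_matI, use Y in auto)
  then show ?thesis unfolding sp_alg_def using Xc by auto
qed

end


context setting begin

lemma gl_emb_idx:
  assumes M: "M \<in> carrier_mat g g" "det M \<noteq> 0" and i: "i < 2*g" and j: "j < 2*g"
  shows "gl_emb g M $$ (i,j) = (if i < g then if j < g then Minv M $$ (i,j) else 0 else if j < g then 0 else M $$ (i-g, j-g))"
proof -
  note m = Minv_props[OF M]
  show ?thesis unfolding gl_emb_Minv using m(1) M(1) i j by (subst index_mat_four_block) auto
qed

lemma one_param:
  fixes G :: "real \<Rightarrow> complex mat" and Y :: "complex mat"
  assumes Gc: "\<And>t. G t \<in> carrier_mat g g" and Gd: "\<And>t. det (G t) \<noteq> 0"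
    and Gadd: "\<And>s t. G (s + t) = G s * G t" and G0: "G 0 = 1\<^sub>m g"
    and Y: "Y \<in> carrier_mat g g"
    and GD: "\<And>i j. i < g \<Longrightarrow> j < g \<Longrightarrow> ((\<lambda>t. G t $$ (i,j)) has_vector_derivative Y $$ (i,j)) (at 0)"
    and GiD: "\<And>i j. i < g \<Longrightarrow> j < g \<Longrightarrow> ((\<lambda>t. Minv (G t) $$ (i,j)) has_vector_derivative - Y $$ (j,i)) (at 0)"
    and detD: "((\<lambda>t. det (G t)) has_vector_derivative tr g Y) (at 0)"
  shows "\<forall>S\<in>Pow {..<NN}. \<forall>T\<in>Pow {..<NN}. Rm (G t) S T = Qm n g (G t) S T"
proof -
  define K where "K = spin n g E (Xof g Y)"
  have fD0: "\<forall>S\<in>Pow {..<NN}. \<forall>T\<in>Pow {..<NN}. ((\<lambda>t. Rm (G t) S T) has_vector_derivative K S T) (at 0)"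
    unfolding Rm_def K_def
  proof (rule rho_diff[OF Xof_sp_alg[OF Y]])
    show "\<forall>t. gl_emb g (G t) \<in> sp_group g" using gl_emb_sp[OF Gc Gd] by blast
    show "gl_emb g (G 0) = 1\<^sub>m (2 * g)" using G0 gl_emb_one by simp
    show "\<forall>i<2 * g. \<forall>j<2 * g. ((\<lambda>t. gl_emb g (G t) $$ (i, j)) has_vector_derivative Xof g Y $$ (i, j)) (at 0)"
    proof (intro allI impI)
      fix i j assume i: "i < 2*g" and j: "j < 2*g"
      show "((\<lambda>t. gl_emb g (G t) $$ (i, j)) has_vector_derivative Xof g Y $$ (i, j)) (at 0)"
        unfolding gl_emb_idx[OF Gc Gd i j] Xof_idx[OF Y i j]
      proof (cases "i < g"; cases "j < g")
        assume "i < g" "j < g" then show "((\<lambda>t. if i < g then if j < g then Minv (G t) $$ (i, j) else 0 else if j < g then 0 else G t $$ (i - g, j - g)) has_vector_derivative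
          (if i < g \<and> j < g then - Y $$ (j, i) else if g \<le> i \<and> g \<le> j then Y $$ (i - g, j - g) else 0)) (at 0)"
          using GiD by simp
      next
        assume "\<not> i < g" "\<not> j < g" then show "((\<lambda>t. if i < g then if j < g then Minv (G t) $$ (i, j) else 0 else if j < g then 0 else G t $$ (i - g, j - g)) has_vector_derivative
          (if i < g \<and> j < g then - Y $$ (j, i) else if g \<le> i \<and> g \<le> j then Y $$ (i - g, j - g) else 0)) (at 0)"
          using GD i j by simp
      qed (auto simp: has_vector_derivative_const)
    qed
  qed
  have detG0: "det (G 0) = 1" using G0 by simp
  have hD0: "\<forall>S\<in>Pow {..<NN}. \<forall>T\<in>Pow {..<NN}. ((\<lambda>t. Qm n g (G t) S T) has_vector_derivative K S T) (at 0)"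
  proof (intro ballI)
    fix S T assume S: "S \<in> Pow {..<NN}" and T: "T \<in> Pow {..<NN}"
    have H0: "\<forall>a<NN. \<forall>b<NN. GF g (G 0) a b = idm a b" using GF_one[OF g_pos] G0 by simp
    have HD: "\<forall>a<NN. \<forall>b<NN. ((\<lambda>t. GF g (G t) a b) has_vector_derivative Zof g Y a b) (at 0)"
    proof (intro allI impI)
      fix a b assume a: "a < NN" and b: "b < NN"
      have am: "a mod g < g" "b mod g < g" using g_pos by auto
      show "((\<lambda>t. GF g (G t) a b) has_vector_derivative Zof g Y a b) (at 0)"
        unfolding GF_Minv Zof_def by (cases "a div g = b div g") (simp_all add: GiD am has_vector_derivative_const)
    qed
    have ed: "((\<lambda>t. ext_map NN (GF g (G t)) S T) has_vector_derivative Der NN (Zof g Y) (basis T) S) (at 0)"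
      by (rule ext_deriv[OF H0 HD S T])
    have pd: "((\<lambda>t. det (G t) ^ n) has_vector_derivative of_nat n * tr g Y) (at 0)"
      by (rule vd_pow[OF detD detG0])
    have e0: "ext_map NN (GF g (G 0)) S T = (if S = T then 1 else 0)"
      using ext_map_cong[OF H0 T, of S] ext_map_id[OF S T] by simp
    have "((\<lambda>t. det (G t) ^ n * ext_map NN (GF g (G t)) S T) has_vector_derivative
        det (G 0) ^ n * Der NN (Zof g Y) (basis T) S + of_nat n * tr g Y * ext_map NN (GF g (G 0)) S T) (at 0)"
      by (rule has_vector_derivative_mult[OF pd ed])
    also have "det (G 0) ^ n * Der NN (Zof g Y) (basis T) S + of_nat n * tr g Y * ext_map NN (GF g (G 0)) S T = K S T"
      unfolding K_def spin_Xof[OF g_pos E_dim Einv Y S T] detG0 e0 by simp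
    finally show "((\<lambda>t. Qm n g (G t) S T) has_vector_derivative K S T) (at 0)"
      unfolding Qm_def rho0_def .
  qed
  have fD: "\<And>t S T. S \<in> Pow {..<NN} \<Longrightarrow> T \<in> Pow {..<NN} \<Longrightarrow>
      ((\<lambda>t. Rm (G t) S T) has_vector_derivative op_comp NN (Rm (G t)) K S T) (at t)"
  proof -
    fix t S T assume S: "S \<in> Pow {..<NN}" and T: "T \<in> Pow {..<NN}"
    have e: "(\<lambda>s. Rm (G (t + s)) S T) = (\<lambda>s. op_comp NN (Rm (G t)) (Rm (G s)) S T)"
      using Rm_hom[OF Gc Gd Gc Gd S T] Gadd by simp
    have "((\<lambda>s. op_comp NN (Rm (G t)) (Rm (G s)) S T) has_vector_derivative op_comp NN (Rm (G t)) K S T) (at 0)"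
      by (rule op_comp_deriv_right) (use fD0 T in auto)
    then have "((\<lambda>s. Rm (G (t + s)) S T) has_vector_derivative op_comp NN (Rm (G t)) K S T) (at 0)"
      unfolding e .
    then show "((\<lambda>t. Rm (G t) S T) has_vector_derivative op_comp NN (Rm (G t)) K S T) (at t)"
      by (rule vd_shift)
  qed
  have hD: "\<And>t S T. S \<in> Pow {..<NN} \<Longrightarrow> T \<in> Pow {..<NN} \<Longrightarrow>
      ((\<lambda>t. Qm n g (G t) S T) has_vector_derivative op_comp NN K (Qm n g (G t)) S T) (at t)"
  proof -
    fix t S T assume S: "S \<in> Pow {..<NN}" and T: "T \<in> Pow {..<NN}"
    have e: "(\<lambda>s. Qm n g (G (t + s)) S T) = (\<lambda>s. op_comp NN (Qm n g (G s)) (Qm n g (G t)) S T)"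
      using Qm_hom[OF g_pos Gc Gd Gc Gd S T] Gadd by (simp add: add.commute)
    have "((\<lambda>s. op_comp NN (Qm n g (G s)) (Qm n g (G t)) S T) has_vector_derivative op_comp NN K (Qm n g (G t)) S T) (at 0)"
      by (rule op_comp_deriv_left) (use hD0 S in auto)
    then have "((\<lambda>s. Qm n g (G (t + s)) S T) has_vector_derivative op_comp NN K (Qm n g (G t)) S T) (at 0)"
      unfolding e .
    then show "((\<lambda>t. Qm n g (G t) S T) has_vector_derivative op_comp NN K (Qm n g (G t)) S T) (at t)"
      by (rule vd_shift)
  qed
  have phiD: "\<And>t S T. S \<in> Pow {..<NN} \<Longrightarrow> T \<in> Pow {..<NN} \<Longrightarrow>
      ((\<lambda>t. op_comp NN (Rm (G t)) (Qm n g (G (-t))) S T) has_vector_derivative 0) (at t)"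
  proof -
    fix t S T assume S: "S \<in> Pow {..<NN}" and T: "T \<in> Pow {..<NN}"
    have hn: "\<And>U. U \<in> Pow {..<NN} \<Longrightarrow> ((\<lambda>t. Qm n g (G (-t)) U T) has_vector_derivative - op_comp NN K (Qm n g (G (-t))) U T) (at t)"
      by (rule vd_neg) (rule hD[OF _ T])
    have "((\<lambda>t. op_comp NN (Rm (G t)) (Qm n g (G (-t))) S T) has_vector_derivative
        (\<Sum>U\<in>Pow {..<NN}. Rm (G t) S U * (- op_comp NN K (Qm n g (G (-t))) U T) + op_comp NN (Rm (G t)) K S U * Qm n g (G (-t)) U T)) (at t)"
      unfolding op_comp_def[of NN "Rm _"]
      by (intro has_vector_derivative_sum has_vector_derivative_mult) (use fD[OF S, unfolded op_comp_def] hn in auto)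
    also have "(\<Sum>U\<in>Pow {..<NN}. Rm (G t) S U * (- op_comp NN K (Qm n g (G (-t))) U T) + op_comp NN (Rm (G t)) K S U * Qm n g (G (-t)) U T)
        = - op_comp NN (Rm (G t)) (op_comp NN K (Qm n g (G (-t)))) S T + op_comp NN (op_comp NN (Rm (G t)) K) (Qm n g (G (-t))) S T"
    proof -
      have a: "(\<Sum>U\<in>Pow {..<NN}. Rm (G t) S U * (- op_comp NN K (Qm n g (G (-t))) U T))
          = - op_comp NN (Rm (G t)) (op_comp NN K (Qm n g (G (-t)))) S T"
        by (simp only: op_comp_def mult_minus_right sum_negf)
      have b: "(\<Sum>U\<in>Pow {..<NN}. op_comp NN (Rm (G t)) K S U * Qm n g (G (-t)) U T)
          = op_comp NN (op_comp NN (Rm (G t)) K) (Qm n g (G (-t))) S T"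
        by (simp only: op_comp_def)
      show ?thesis unfolding sum.distrib a b ..
    qed
    also have "\<dots> = 0" by (simp add: op_comp_assoc)
    finally show "((\<lambda>t. op_comp NN (Rm (G t)) (Qm n g (G (-t))) S T) has_vector_derivative 0) (at t)" .
  qed
  have phi_const: "\<And>t S T. S \<in> Pow {..<NN} \<Longrightarrow> T \<in> Pow {..<NN} \<Longrightarrow>
      op_comp NN (Rm (G t)) (Qm n g (G (-t))) S T = (if S = T then 1 else 0)"
  proof -
    fix t S T assume S: "S \<in> Pow {..<NN}" and T: "T \<in> Pow {..<NN}"
    obtain c where c: "\<And>x. x \<in> UNIV \<Longrightarrow> op_comp NN (Rm (G x)) (Qm n g (G (-x))) S T = c"
      by (rule has_vector_derivative_zero_constant[of UNIV]) (use phiD[OF S T] in auto)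
    have "op_comp NN (Rm (G 0)) (Qm n g (G (-0))) S T = op_comp NN (\<lambda>S T. if S = T then 1 else 0) (Qm n g (1\<^sub>m g)) S T"
      using G0 by (intro op_comp_cong) (use Rm_one S in auto)
    also have "\<dots> = Qm n g (1\<^sub>m g) S T" by (rule op_comp_id_left[OF S])
    also have "\<dots> = (if S = T then 1 else 0)" by (rule Qm_one[OF g_pos S T])
    finally show "op_comp NN (Rm (G t)) (Qm n g (G (-t))) S T = (if S = T then 1 else 0)"
      using c[of t] c[of 0] by simp
  qed
  show ?thesis
  proof (intro ballI)
    fix S T assume S: "S \<in> Pow {..<NN}" and T: "T \<in> Pow {..<NN}"
    have inner: "\<And>U. U \<in> Pow {..<NN} \<Longrightarrow> op_comp NN (Qm n g (G (-t))) (Qm n g (G t)) U T = (if U = T then 1 else 0)"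
    proof -
      fix U assume U: "U \<in> Pow {..<NN}"
      have "op_comp NN (Qm n g (G (-t))) (Qm n g (G t)) U T = Qm n g (G (-t) * G t) U T"
        by (rule Qm_hom[symmetric, OF g_pos Gc Gd Gc Gd U T])
      also have "G (-t) * G t = 1\<^sub>m g" using Gadd[of "-t" t] G0 by simp
      finally show "op_comp NN (Qm n g (G (-t))) (Qm n g (G t)) U T = (if U = T then 1 else 0)"
        using Qm_one[OF g_pos U T] by simp
    qed
    have "Rm (G t) S T = op_comp NN (Rm (G t)) (\<lambda>S T. if S = T then 1 else 0) S T"
      by (rule op_comp_id_right[symmetric, OF T])
    also have "\<dots> = op_comp NN (Rm (G t)) (op_comp NN (Qm n g (G (-t))) (Qm n g (G t))) S T"
      by (rule op_comp_cong) (use inner in auto)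
    also have "\<dots> = op_comp NN (op_comp NN (Rm (G t)) (Qm n g (G (-t)))) (Qm n g (G t)) S T"
      by (rule op_comp_assoc[symmetric])
    also have "\<dots> = op_comp NN (\<lambda>S T. if S = T then 1 else 0) (Qm n g (G t)) S T"
      by (rule op_comp_cong) (use phi_const S in auto)
    also have "\<dots> = Qm n g (G t) S T" by (rule op_comp_id_left[OF S])
    finally show "Rm (G t) S T = Qm n g (G t) S T" .
  qed
qed

end


lemma lin_vd: "((\<lambda>t::real. complex_of_real t * c) has_vector_derivative c) (at x)"
  by (auto intro!: derivative_eq_intros)

lemma exp_vd: "((\<lambda>t::real. exp (complex_of_real t * c)) has_vector_derivative c * exp (complex_of_real x * c)) (at x)"
proof -
  have 2: "(exp has_field_derivative exp (complex_of_real x * c)) (at ((\<lambda>t::real. complex_of_real t * c) x))"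
    by (rule DERIV_exp)
  from field_vector_diff_chain_at[OF lin_vd 2] show ?thesis by (simp add: o_def)
qed

definition Ydiag :: "nat \<Rightarrow> nat \<Rightarrow> complex \<Rightarrow> complex mat" where
  "Ydiag g k c = mat g g (\<lambda>(i,j). if i = k \<and> j = k then c else 0)"

definition Ytr :: "nat \<Rightarrow> nat \<Rightarrow> nat \<Rightarrow> complex \<Rightarrow> complex mat" where
  "Ytr g k l c = mat g g (\<lambda>(i,j). if i = k \<and> j = l then c else 0)"

lemma multrow_mult: "k < g \<Longrightarrow> multrow_mat g k a * multrow_mat g k b = multrow_mat g k (a * (b::complex))"
  by (subst multrow_mat[symmetric, of _ g g]) (auto intro!: eq_matI)

lemma multrow_one: "multrow_mat g k 1 = (1\<^sub>m g :: complex mat)"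
  by (rule eq_matI) auto

lemma multrow_transpose: "transpose_mat (multrow_mat g k a) = multrow_mat g k a"
  by (rule eq_matI) auto

lemma Minv_multrow:
  assumes k: "k < g" and a: "a \<noteq> 0"
  shows "Minv (multrow_mat g k a) = multrow_mat g k (inverse a)"
  unfolding Minv_def multrow_transpose
  by (rule inv_mat_unique[of _ g]) (auto simp: multrow_mult[OF k] a multrow_one)

lemma addrow_mult: "k < g \<Longrightarrow> l < g \<Longrightarrow> k \<noteq> l \<Longrightarrow> addrow_mat g a k l * addrow_mat g b k l = addrow_mat g (a + (b::complex)) k l"
  by (subst addrow_mat[symmetric, of _ g g]) (auto intro!: eq_matI simp: algebra_simps)

lemma addrow_zero: "addrow_mat g 0 k l = (1\<^sub>m g :: complex mat)"
  by (rule eq_matI) auto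

lemma addrow_transpose: "transpose_mat (addrow_mat g a k l) = addrow_mat g a l k"
  by (rule eq_matI) auto

lemma Minv_addrow:
  assumes k: "k < g" "l < g" "k \<noteq> l"
  shows "Minv (addrow_mat g a k l) = addrow_mat g (- a) l (k :: nat)"
  unfolding Minv_def addrow_transpose
  by (rule inv_mat_unique[of _ g]) (use k in \<open>auto simp: addrow_mult addrow_zero\<close>)

context setting begin

lemma good_multrow:
  assumes k: "k < g" and a: "a \<noteq> 0"
  shows "\<forall>S\<in>Pow {..<NN}. \<forall>T\<in>Pow {..<NN}. Rm (multrow_mat g k a) S T = Qm n g (multrow_mat g k a) S T"
proof -
  define c where "c = Ln a"
  define G where "G = (\<lambda>t::real. multrow_mat g k (exp (complex_of_real t * c)) :: complex mat)"
  have G1: "G 1 = multrow_mat g k a" unfolding G_def c_def using a by simp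
  have Gc: "\<And>t. G t \<in> carrier_mat g g" unfolding G_def by simp
  have detG: "\<And>t. det (G t) = exp (complex_of_real t * c)" unfolding G_def by (rule det_multrow_mat[OF k])
  have Gd: "\<And>t. det (G t) \<noteq> 0" using detG by simp
  have Gadd: "\<And>s t. G (s + t) = G s * G t"
    unfolding G_def multrow_mult[OF k] by (simp add: distrib_right exp_add)
  have G0: "G 0 = 1\<^sub>m g" unfolding G_def by (simp add: multrow_one)
  have Y: "Ydiag g k c \<in> carrier_mat g g" unfolding Ydiag_def by simp
  have GD: "\<And>i j. i < g \<Longrightarrow> j < g \<Longrightarrow> ((\<lambda>t. G t $$ (i,j)) has_vector_derivative Ydiag g k c $$ (i,j)) (at 0)"
  proof -
    fix i j assume ij: "i < g" "j < g"
    show "((\<lambda>t. G t $$ (i,j)) has_vector_derivative Ydiag g k c $$ (i,j)) (at 0)"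
      using ij exp_vd[of c 0] unfolding G_def Ydiag_def by (cases "i = k \<and> j = k") (auto simp: has_vector_derivative_const)
  qed
  have Minv: "\<And>t. Minv (G t) = multrow_mat g k (exp (complex_of_real (-t) * c))"
    unfolding G_def by (subst Minv_multrow[OF k]) (simp_all add: exp_minus)
  have GiD: "\<And>i j. i < g \<Longrightarrow> j < g \<Longrightarrow> ((\<lambda>t. Minv (G t) $$ (i,j)) has_vector_derivative - Ydiag g k c $$ (j,i)) (at 0)"
  proof -
    fix i j assume ij: "i < g" "j < g"
    have e: "(\<lambda>t::real. exp (complex_of_real (-t) * c)) = (\<lambda>t. exp (complex_of_real t * (-c)))" by simp
    show "((\<lambda>t. Minv (G t) $$ (i,j)) has_vector_derivative - Ydiag g k c $$ (j,i)) (at 0)"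
      using ij exp_vd[of "-c" 0] unfolding Minv Ydiag_def e by (cases "i = k \<and> j = k") (auto simp: has_vector_derivative_const)
  qed
  have tr: "tr g (Ydiag g k c) = c"
  proof -
    have "tr g (Ydiag g k c) = (\<Sum>i<g. if i = k then c else 0)" unfolding tr_def Ydiag_def by (intro sum.cong) auto
    then show ?thesis using k by simp
  qed
  have detD: "((\<lambda>t. det (G t)) has_vector_derivative tr g (Ydiag g k c)) (at 0)"
    unfolding detG tr using exp_vd[of c 0] by simp
  from one_param[OF Gc Gd Gadd G0 Y GD GiD detD, of 1] show ?thesis unfolding G1 .
qed

lemma good_addrow:
  assumes k: "k < g" "l < g" "k \<noteq> l"
  shows "\<forall>S\<in>Pow {..<NN}. \<forall>T\<in>Pow {..<NN}. Rm (addrow_mat g a k l) S T = Qm n g (addrow_mat g a k l) S T"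
proof -
  define G where "G = (\<lambda>t::real. addrow_mat g (complex_of_real t * a) k l :: complex mat)"
  have G1: "G 1 = addrow_mat g a k l" unfolding G_def by simp
  have Gc: "\<And>t. G t \<in> carrier_mat g g" unfolding G_def by simp
  have detG: "\<And>t. det (G t) = 1" unfolding G_def by (rule det_addrow_mat) (use k in auto)
  have Gd: "\<And>t. det (G t) \<noteq> 0" using detG by simp
  have Gadd: "\<And>s t. G (s + t) = G s * G t"
    unfolding G_def addrow_mult[OF k] by (simp add: distrib_right)
  have G0: "G 0 = 1\<^sub>m g" unfolding G_def by (simp add: addrow_zero)
  have Y: "Ytr g k l a \<in> carrier_mat g g" unfolding Ytr_def by simp
  have GD: "\<And>i j. i < g \<Longrightarrow> j < g \<Longrightarrow> ((\<lambda>t. G t $$ (i,j)) has_vector_derivative Ytr g k l a $$ (i,j)) (at 0)"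
  proof -
    fix i j assume ij: "i < g" "j < g"
    show "((\<lambda>t. G t $$ (i,j)) has_vector_derivative Ytr g k l a $$ (i,j)) (at 0)"
      using ij k lin_vd[of a 0] unfolding G_def Ytr_def by (cases "k = i \<and> l = j") (auto simp: has_vector_derivative_const)
  qed
  have Minv: "\<And>t. Minv (G t) = addrow_mat g (complex_of_real (-t) * a) l k"
    unfolding G_def by (subst Minv_addrow[OF k]) simp_all
  have GiD: "\<And>i j. i < g \<Longrightarrow> j < g \<Longrightarrow> ((\<lambda>t. Minv (G t) $$ (i,j)) has_vector_derivative - Ytr g k l a $$ (j,i)) (at 0)"
  proof -
    fix i j assume ij: "i < g" "j < g"
    have e: "(\<lambda>t::real. complex_of_real (-t) * a) = (\<lambda>t. complex_of_real t * (-a))" by simp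
    show "((\<lambda>t. Minv (G t) $$ (i,j)) has_vector_derivative - Ytr g k l a $$ (j,i)) (at 0)"
      using ij k lin_vd[of "-a" 0] unfolding Minv Ytr_def e by (cases "l = i \<and> k = j") (auto simp: has_vector_derivative_const)
  qed
  have tr: "tr g (Ytr g k l a) = 0"
    unfolding tr_def Ytr_def using k by (intro sum.neutral) auto
  have detD: "((\<lambda>t. det (G t)) has_vector_derivative tr g (Ytr g k l a)) (at 0)"
    unfolding detG tr by (rule has_vector_derivative_const)
  from one_param[OF Gc Gd Gadd G0 Y GD GiD detD, of 1] show ?thesis unfolding G1 .
qed

end


lemma swap_rows_eq:
  assumes k: "k < g" and l: "l < g" and kl: "k \<noteq> l"
  shows "addrow 1 k l (addrow (-1) l k (addrow 1 k l (multrow_mat g k (-1 :: complex)))) = swaprows_mat g k l"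
proof (rule eq_matI)
  fix i j assume i: "i < dim_row (swaprows_mat g k l)" and j: "j < dim_col (swaprows_mat g k l)"
  then have i: "i < g" and j: "j < g" by auto
  show "addrow 1 k l (addrow (-1) l k (addrow 1 k l (multrow_mat g k (-1 :: complex)))) $$ (i, j) = swaprows_mat g k l $$ (i, j)"
    using i j k l kl by (cases "i = k"; cases "i = l"; cases "j = k"; cases "j = l") simp_all
qed auto

lemma swap_decomp:
  assumes k: "k < g" and l: "l < g" and kl: "k \<noteq> l"
  shows "swaprows_mat g k l = addrow_mat g 1 k l * (addrow_mat g (-1) l k * (addrow_mat g 1 k l * multrow_mat g k (-1 :: complex)))"
proof -
  have c: "multrow_mat g k (-1::complex) \<in> carrier_mat g g" by simp
  have e1: "addrow_mat g 1 k l * multrow_mat g k (-1::complex) = addrow 1 k l (multrow_mat g k (-1))"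
    by (rule addrow_mat[symmetric, OF c l])
  have c1: "addrow 1 k l (multrow_mat g k (-1::complex)) \<in> carrier_mat g g" by simp
  have e2: "addrow_mat g (-1) l k * addrow 1 k l (multrow_mat g k (-1::complex)) = addrow (-1) l k (addrow 1 k l (multrow_mat g k (-1)))"
    by (rule addrow_mat[symmetric, OF c1 k])
  have c2: "addrow (-1) l k (addrow 1 k l (multrow_mat g k (-1::complex))) \<in> carrier_mat g g" by simp
  have e3: "addrow_mat g 1 k l * addrow (-1) l k (addrow 1 k l (multrow_mat g k (-1::complex))) = addrow 1 k l (addrow (-1) l k (addrow 1 k l (multrow_mat g k (-1))))"
    by (rule addrow_mat[symmetric, OF c2 l])
  show ?thesis unfolding e1 e2 e3 swap_rows_eq[OF k l kl] ..
qed

context setting begin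

definition good :: "complex mat \<Rightarrow> bool" where
  "good M \<longleftrightarrow> M \<in> carrier_mat g g \<and> det M \<noteq> 0 \<and> (\<forall>S\<in>Pow {..<NN}. \<forall>T\<in>Pow {..<NN}. Rm M S T = Qm n g M S T)"

lemma good_mult: assumes A: "good A" and B: "good B" shows "good (A * B)"
proof -
  have A': "A \<in> carrier_mat g g" "det A \<noteq> 0" and B': "B \<in> carrier_mat g g" "det B \<noteq> 0"
    using A B unfolding good_def by auto
  have "\<forall>S\<in>Pow {..<NN}. \<forall>T\<in>Pow {..<NN}. Rm (A * B) S T = Qm n g (A * B) S T"
  proof (intro ballI)
    fix S T assume S: "S \<in> Pow {..<NN}" and T: "T \<in> Pow {..<NN}"
    have "Rm (A * B) S T = op_comp NN (Rm A) (Rm B) S T" by (rule Rm_hom[OF A' B' S T])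
    also have "\<dots> = op_comp NN (Qm n g A) (Qm n g B) S T"
      by (rule op_comp_cong) (use A B S T in \<open>auto simp: good_def\<close>)
    also have "\<dots> = Qm n g (A * B) S T" by (rule Qm_hom[symmetric, OF g_pos A' B' S T])
    finally show "Rm (A * B) S T = Qm n g (A * B) S T" .
  qed
  then show ?thesis unfolding good_def using A' B' by (simp add: det_mult[OF A'(1) B'(1)])
qed

lemma good_one: "good (1\<^sub>m g)"
  unfolding good_def using Rm_one Qm_one[OF g_pos] by simp

lemma good_multrow_mat: "k < g \<Longrightarrow> a \<noteq> 0 \<Longrightarrow> good (multrow_mat g k a)"
  unfolding good_def by (simp add: good_multrow det_multrow_mat)

lemma good_addrow_mat: "k < g \<Longrightarrow> l < g \<Longrightarrow> k \<noteq> l \<Longrightarrow> good (addrow_mat g a k l)"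
  unfolding good_def by (simp add: good_addrow det_addrow_mat)

lemma good_swaprows_mat:
  assumes k: "k < g" and l: "l < g"
  shows "good (swaprows_mat g k l)"
proof (cases "k = l")
  case True
  have "swaprows_mat g k l = (1\<^sub>m g :: complex mat)" using True by (intro eq_matI) auto
  then show ?thesis using good_one by (simp only:)
next
  case False
  show ?thesis unfolding swap_decomp[OF k l False]
    by (intro good_mult good_addrow_mat good_multrow_mat) (use k l False in auto)
qed

lemma good_inverse:
  assumes P: "good P" and M: "M \<in> carrier_mat g g" and PM: "P * M = 1\<^sub>m g"
  shows "good M"
proof -
  have Pc: "P \<in> carrier_mat g g" "det P \<noteq> 0" using P unfolding good_def by auto
  have MP: "M * P = 1\<^sub>m g" by (rule mat_mult_left_right_inverse[OF Pc(1) M PM])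
  have "det P * det M = 1" using det_mult[OF Pc(1) M] PM by simp
  then have dM: "det M \<noteq> 0" by auto
  have "\<forall>S\<in>Pow {..<NN}. \<forall>T\<in>Pow {..<NN}. Rm M S T = Qm n g M S T"
  proof (intro ballI)
    fix S T assume S: "S \<in> Pow {..<NN}" and T: "T \<in> Pow {..<NN}"
    have inner: "\<And>U. U \<in> Pow {..<NN} \<Longrightarrow> op_comp NN (Qm n g P) (Qm n g M) U T = (if U = T then 1 else 0)"
      using Qm_hom[OF g_pos Pc M dM _ T] PM Qm_one[OF g_pos _ T] by simp
    have outer: "\<And>U. U \<in> Pow {..<NN} \<Longrightarrow> op_comp NN (Rm M) (Rm P) S U = (if S = U then 1 else 0)"
      using Rm_hom[OF M dM Pc S] MP Rm_one[OF S] by simp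
    have "Rm M S T = op_comp NN (Rm M) (\<lambda>S T. if S = T then 1 else 0) S T"
      by (rule op_comp_id_right[symmetric, OF T])
    also have "\<dots> = op_comp NN (Rm M) (op_comp NN (Qm n g P) (Qm n g M)) S T"
      by (rule op_comp_cong) (use inner in auto)
    also have "\<dots> = op_comp NN (op_comp NN (Rm M) (Qm n g P)) (Qm n g M) S T"
      by (rule op_comp_assoc[symmetric])
    also have "\<dots> = op_comp NN (op_comp NN (Rm M) (Rm P)) (Qm n g M) S T"
    proof (rule op_comp_cong)
      fix U assume U: "U \<in> Pow {..<NN}"
      show "op_comp NN (Rm M) (Qm n g P) S U = op_comp NN (Rm M) (Rm P) S U"
        by (rule op_comp_cong) (use P U in \<open>auto simp: good_def\<close>)
    qed simp
    also have "\<dots> = op_comp NN (\<lambda>S T. if S = T then 1 else 0) (Qm n g M) S T"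
      by (rule op_comp_cong) (use outer in auto)
    also have "\<dots> = Qm n g M S T" by (rule op_comp_id_left[OF S])
    finally show "Rm M S T = Qm n g M S T" .
  qed
  then show ?thesis unfolding good_def using M dM by simp
qed

lemma good_elim:
  "i < g \<Longrightarrow> (\<And>a i'. (a, i') \<in> set is \<Longrightarrow> i' < g \<and> i' \<noteq> i)
  \<Longrightarrow> \<exists>P. good P \<and> (\<forall>B nc. B \<in> carrier_mat g nc \<longrightarrow> eliminate_entries_rec B i is = P * B)"
proof (induct "is")
  case Nil
  thus ?case by (intro exI[of _ "1\<^sub>m g"]) (auto simp: good_one)
next
  case (Cons ai' "is")
  obtain a i' where ai': "ai' = (a,i')" by force
  from Cons(1)[OF Cons(2-3)]
  obtain P where P: "good P" and id: "\<And>B nc. B \<in> carrier_mat g nc \<Longrightarrow> eliminate_entries_rec B i is = P * B" by force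
  let ?Add = "addrow_mat g a i' i"
  have Add: "good ?Add" by (rule good_addrow_mat) (use Cons ai' in auto)
  have PI: "good (P * ?Add)" by (rule good_mult[OF P Add])
  have Pc: "P \<in> carrier_mat g g" using P unfolding good_def by auto
  show ?case
  proof (rule exI[of _ "P * ?Add"], intro conjI allI impI PI)
    fix B :: "complex mat" and nc
    assume BB: "B \<in> carrier_mat g nc"
    let ?B = "addrow a i' i B"
    from BB have B: "?B \<in> carrier_mat g nc" by simp
    from id[OF B] have id: "eliminate_entries_rec ?B i is = P * ?B" .
    have id2: "eliminate_entries_rec B i (ai' # is) = eliminate_entries_rec ?B i is" unfolding ai' by simp
    show "eliminate_entries_rec B i (ai' # is) = P * ?Add * B"
      unfolding id2 id unfolding addrow_mat[OF BB Cons(2)]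
      by (rule assoc_mult_mat[symmetric, OF Pc _ BB], auto)
  qed
qed

lemma good_gauss_jordan:
  assumes A: "A \<in> carrier_mat g nc" and B: "B \<in> carrier_mat g nc'"
  and res: "gauss_jordan (A :: complex mat) B = (A',B')"
  shows "\<exists>P. good P \<and> A' = P * A \<and> B' = P * B"
proof -
  {
    fix i j :: nat
    assume "gauss_jordan_main A B i j = (A',B')"
    with A B
    have "\<exists>P. good P \<and> A' = P * A \<and> B' = P * B"
    proof (induction A B i j rule: gauss_jordan_main.induct)
      case (1 A B i j)
      note A = 1(5)
      hence dim: "dim_row A = g" "dim_col A = nc" by auto
      note B = 1(6)
      hence dimB: "dim_row B = g" "dim_col B = nc'" by auto
      note IH = 1(1-4)[OF dim[symmetric]]
      note res = 1(7)
      note simp = gauss_jordan_main.simps[of A B i j] Let_def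
      show ?case
      proof (cases "i < g \<and> j < nc")
        case False
        with res have res: "A' = A" "B' = B" unfolding simp dim by auto
        show ?thesis unfolding res
          by (rule exI[of _ "1\<^sub>m g"], insert A B, auto simp: good_one)
      next
        case True note valid = this
        note IH = IH[OF valid refl]
        show ?thesis
        proof (cases "A $$ (i,j) = 0")
          case False note nZ = this
          note IH = IH(3-4)[OF nZ]
          show ?thesis
          proof (cases "A $$ (i,j) = 1")
            case False note nO = this
            let ?inv = "inverse (A $$ (i,j))"
            from nO nZ valid res
            have "gauss_jordan_main (multrow i ?inv A) (multrow i ?inv B) i j = (A',B')"
              unfolding simp dim by simp
            note IH = IH(2)[OF nO refl, unfolded multrow_carrier, OF A B this]
            from IH obtain P where P: "good P" and
              id: "A' = P * multrow i ?inv A" "B' = P * multrow i ?inv B" by blast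
            let ?Inv = "multrow_mat g i ?inv"
            from nZ valid have "i < g" "?inv \<noteq> 0" by auto
            then have Inv: "good ?Inv" by (rule good_multrow_mat)
            have PI: "good (P * ?Inv)" by (rule good_mult[OF P Inv])
            from P have P: "P \<in> carrier_mat g g" unfolding good_def by simp
            show ?thesis unfolding id unfolding multrow_mat[OF A] multrow_mat[OF B]
              by (rule exI[of _ "P * ?Inv"], intro conjI PI,
                rule assoc_mult_mat[symmetric, OF P _ A], simp,
                rule assoc_mult_mat[symmetric, OF P _ B], simp)
          next
            case True note O = this
            let ?is = "filter (\<lambda> i'. i' \<noteq> i) [0 ..< g]"
            let ?ais = "map (\<lambda> i'. (-A $$ (i',j), i')) ?is"
            let ?E = "\<lambda> B. eliminate_entries (\<lambda> i. A $$ (i,j)) B i j"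
            let ?EE = "\<lambda> B. eliminate_entries_rec B i ?ais"
            let ?A = "?E A"
            let ?B = "?E B"
            from O nZ valid res have "gauss_jordan_main ?A ?B (Suc i) (Suc j) = (A',B')"
              unfolding simp dim by simp
            note IH = IH(1)[OF O refl carrier_eliminate_entries(1)[OF A] carrier_eliminate_entries(1)[OF B] this]
            from IH obtain P where P: "good P" and id: "A' = P * ?A" "B' = P * ?B" by blast
            have *: "j < dim_col A" "i < dim_row A" by (auto simp add: dim valid)
            have "\<exists>P. good P \<and> (\<forall> B nc. B \<in> carrier_mat g nc \<longrightarrow> ?EE B = P * B)"
              by (rule good_elim, insert valid, auto)
            then obtain Q where Q: "good Q" and QQ: "\<And> B nc. B \<in> carrier_mat g nc \<Longrightarrow> ?EE B = Q * B" by auto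
            {
              fix B :: "complex mat" and nc
              assume B: "B \<in> carrier_mat g nc"
              with dim have "dim_row B = dim_row A" by auto
              from eliminate_entries_convert[OF * this]
              have "?E B = ?EE B" using dim by simp
              also have "\<dots> = Q * B" using QQ[OF B] by simp
              finally have "?E B = Q * B" .
            } note QQ = this
            have id3: "?A = Q * A" by (rule QQ[OF A])
            have id4: "?B = Q * B" by (rule QQ[OF B])
            have Pc: "P \<in> carrier_mat g g" using P unfolding good_def by simp
            have Qc: "Q \<in> carrier_mat g g" using Q unfolding good_def by simp
            have PQ: "good (P * Q)" by (rule good_mult[OF P Q])
            show ?thesis unfolding id unfolding id3 id4
              by (rule exI[of _ "P * Q"], intro conjI PQ,
              rule assoc_mult_mat[symmetric, OF Pc Qc A],
              rule assoc_mult_mat[symmetric, OF Pc Qc B])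
          qed
        next
          case True note Z = this
          note IH = IH(1-2)[OF Z]
          let ?is = "[ i' . i' <- [Suc i ..< g],  A $$ (i',j) \<noteq> 0]"
          show ?thesis
          proof (cases ?is)
            case Nil
            from Z valid res have id: "gauss_jordan_main A B i (Suc j) = (A',B')" unfolding simp dim Nil by simp
            from IH(1)[OF Nil A B this] show ?thesis .
          next
            case (Cons i' iis)
            from Z valid res have "gauss_jordan_main (swaprows i i' A) (swaprows i i' B) i j = (A',B')"
              unfolding simp dim Cons by simp
            from IH(2)[OF Cons, unfolded swaprows_carrier, OF A B this]
            obtain P where P: "good P" and
              id: "A' = P * swaprows i i' A" "B' = P * swaprows i i' B" by blast
            let ?Swap = "swaprows_mat g i i'"
            from Cons have "i' \<in> set ?is" by auto
            with valid have i': "i < g" "i' < g" by auto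
            have Swap: "good ?Swap" by (rule good_swaprows_mat[OF i'])
            have PI: "good (P * ?Swap)" by (rule good_mult[OF P Swap])
            from P have P: "P \<in> carrier_mat g g" unfolding good_def by simp
            show ?thesis unfolding id swaprows_mat[OF A i'] swaprows_mat[OF B i']
              by (rule exI[of _ "P * ?Swap"], intro conjI PI,
              rule assoc_mult_mat[symmetric, OF P _ A], simp,
              rule assoc_mult_mat[symmetric, OF P _ B], simp)
          qed
        qed
      qed
    qed
  }
  from this[of 0 0, folded gauss_jordan_def, OF res] show ?thesis .
qed

lemma good_all:
  assumes M: "M \<in> carrier_mat g g" and d: "det M \<noteq> 0"
  shows "good M"
proof -
  obtain A' B' where res: "gauss_jordan M (0\<^sub>m g 0) = (A', B')" by force
  have "M \<in> Units (ring_mat TYPE(complex) g ())" by (rule det_non_zero_imp_unit[OF M d])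
  then have "fst (gauss_jordan M (0\<^sub>m g 0)) = 1\<^sub>m g"
    by (rule gauss_jordan_inverse_other_direction[OF _ zero_carrier_mat])
  then have A': "A' = 1\<^sub>m g" using res by simp
  from good_gauss_jordan[OF M zero_carrier_mat res] obtain P where P: "good P" "A' = P * M" by blast
  show ?thesis by (rule good_inverse[OF P(1) M]) (use P A' in simp)
qed

end


theorem proposition1:
  fixes n g :: nat and E :: "complex mat"
    and \<rho> :: "complex mat \<Rightarrow> nat set \<Rightarrow> nat set \<Rightarrow> complex"
  assumes E_dim: "E \<in> carrier_mat (2*n) (2*n)"
    and E_skew: "transpose_mat E = - E"
    and E_nondeg: "det E \<noteq> 0"
    and rho_one: "\<forall>S\<in>Pow {..<2*n*g}. \<forall>T\<in>Pow {..<2*n*g}.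
                    \<rho> (1\<^sub>m (2*g)) S T = (if S = T then 1 else 0)"
    and rho_hom: "\<forall>A\<in>sp_group g. \<forall>B\<in>sp_group g. \<forall>S\<in>Pow {..<2*n*g}. \<forall>T\<in>Pow {..<2*n*g}.
                    \<rho> (A * B) S T = op_comp (2*n*g) (\<rho> A) (\<rho> B) S T"
    and rho_diff: "\<And>X (\<gamma> :: real \<Rightarrow> complex mat).
        X \<in> sp_alg g \<Longrightarrow> (\<forall>t. \<gamma> t \<in> sp_group g) \<Longrightarrow> \<gamma> 0 = 1\<^sub>m (2*g) \<Longrightarrow>
        (\<forall>i<2*g. \<forall>j<2*g. ((\<lambda>t. \<gamma> t $$ (i, j)) has_vector_derivative X $$ (i, j)) (at 0)) \<Longrightarrow>
        \<forall>S\<in>Pow {..<2*n*g}. \<forall>T\<in>Pow {..<2*n*g}.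
          ((\<lambda>t. \<rho> (\<gamma> t) S T) has_vector_derivative spin n g E X S T) (at 0)"
  shows "\<forall>M\<in>carrier_mat g g. det M \<noteq> 0 \<longrightarrow>
           (\<forall>S\<in>Pow {..<2*n*g}. \<forall>T\<in>Pow {..<2*n*g}.
              \<rho> (gl_emb g M) S T = det M ^ n * rho0 n g M S T)"
proof (cases "g = 0")
  case False
  then have gp: "0 < g" by simp
  interpret setting n g E \<rho>
    by (unfold_locales) (use gp E_dim E_nondeg rho_one rho_hom rho_diff in auto)
  show ?thesis
  proof (intro ballI impI)
    fix M :: "complex mat" and S T assume M: "M \<in> carrier_mat g g" and d: "det M \<noteq> 0"
      and S: "S \<in> Pow {..<2*n*g}" and T: "T \<in> Pow {..<2*n*g}"
    have "good M" by (rule good_all[OF M d])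
    then show "\<rho> (gl_emb g M) S T = det M ^ n * rho0 n g M S T"
      unfolding good_def Rm_def Qm_def using S T by auto
  qed
next
  case True
  show ?thesis
  proof (intro ballI impI)
    fix M :: "complex mat" and S T assume M: "M \<in> carrier_mat g g" and d: "det M \<noteq> 0"
      and S: "S \<in> Pow {..<2*n*g}" and T: "T \<in> Pow {..<2*n*g}"
    have ST: "S = {}" "T = {}" using S T True by auto
    have M1: "M = 1\<^sub>m g" using M True by (intro eq_matI) auto
    have ge: "gl_emb g M = 1\<^sub>m (2*g)" unfolding M1 by (rule gl_emb_one)
    have "\<rho> (gl_emb g M) S T = 1" using rho_one S T ST unfolding ge by simp
    moreover have "rho0 n g M S T = 1"
      unfolding rho0_def ext_map_def ST by (simp add: vacuum_def)
    moreover have "det M = 1" unfolding M1 by simp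
    ultimately show "\<rho> (gl_emb g M) S T = det M ^ n * rho0 n g M S T" by simp
  qed
qed


end
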